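(* Let $n\ge 2$ and let $F$ be any distribution of private values with support contained in $[\underline v,\overline v]$, $0\le\underline v\le\overline v<\infty$ (the lowest and highest points of $\text{supp}(F)$). Then there exist beliefs $(l^\star,\mu^\star,u^\star)$, held by every bidder, such that, with every bidder using the minimax-loss bidding function $\beta^{\text{IND}}(\cdot|l^\star,\mu^\star,u^\star)$ for the individual belief set $\mathcal B_i(l^\star,\mu^\star,u^\star)$, the tuple $(\beta^{\text{IND}},l^\star,\mu^\star,u^\star)$ is a moment equilibrium, and $v\mapsto\beta^{\text{IND}}(v|l^\star,\mu^\star,u^\star)$ is strictly increasing in $v$.
   Context: First-price sealed-bid auction for a single good with a set $N$ of $n\ge2$ risk-neutral bidders; values i.i.d. from $F$; highest bid wins and pays its bid; ties broken uniformly at random; payoff $v_i-b_i$ upon winning (shared equally among tying winners), $0$ otherwise; strategies are measurable maps $\beta_i:\text{supp}(F)\to\mathbb R_+$. For opponents' joint bid distribution $B_{-i}$, $U_i(b,B_{-i})$ is the expected payoff and $\lambda_i(b,B_{-i}|v_i)=\sup_{\tilde b\in\mathbb R_+}U_i(\tilde b,B_{-i})-U_i(b,B_{-i})$ is the loss. Individual belief set: $\mathcal B_{ij}(l,\mu,u)=\{B\text{ on }\mathbb R_+:\int_l^udB=1,\int x\,dB(x)=\mu\}$ and $\mathcal B_i(l,\mu,u)$ is the set of product distributions $\prod_{j\ne i}B_j$ with $B_j\in\mathcal B_{ij}(l,\mu,u)$. A minimax-loss bid for value $v_i$ is any element of $\arg\inf_{b\in\mathbb R_+}\sup_{B_{-i}\in\mathcal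 B_i(l,\mu,u)}\lambda_i(b,B_{-i}|v_i)$, denoted $\beta^{\text{IND}}(v_i|l,\mu,u)$. Moment equilibrium: a tuple $(\beta,l,\mu,u)$ with $\beta=(\beta_i)_{i\in N}$ and per-player beliefs $(l_i,\mu_i,u_i)$ such that (1) for each $i$ and $v_i\in\text{supp}(F)$, $\beta_i(v_i|l_i,\mu_i,u_i)$ is a minimax-loss bid for $\mathcal B_i(l_i,\mu_i,u_i)$; (2) $\int\beta_i(v|l_i,\mu_i,u_i)\,dF(v)=\mu_j$ for all $i$ and $j\ne i$; (3) for all $i$ and $j\ne i$, $\inf_{v\in\text{supp}(F)}\beta_i(v|l_i,\mu_i,u_i)=l_j$ and $\sup_{v\in\text{supp}(F)}\beta_i(v|l_i,\mu_i,u_i)=u_j$. *)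

theory Defs
  imports "HOL-Probability.Probability"
begin

definition supp :: "real measure \<Rightarrow> real set" where
  "supp F = {x. \<forall>e>0. 0 < measure F {x - e <..< x + e}}"

text \<open>Ex-post payoff of a bidder with value v bidding b against the opponents' bid
  profile x (indexed by the opponent set J): the highest bid wins, ties are broken
  uniformly at random (so the payoff is shared equally among tying winners).\<close>
definition payoff :: "nat set \<Rightarrow> real \<Rightarrow> real \<Rightarrow> (nat \<Rightarrow> real) \<Rightarrow> real" where
  "payoff J v b x =
     (if (\<forall>j\<in>J. x j \<le> b) then (v - b) / real (1 + card {j\<in>J. x j = b}) else 0)"

definition exp_payoff :: "nat set \<Rightarrow> (nat \<Rightarrow> real measure) \<Rightarrow> real \<Rightarrow> real \<Rightarrow> real" where
  "exp_payoff J B v b = (\<integral>x. payoff J v b x \<partial>(PiM J B))"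

definition loss :: "nat set \<Rightarrow> (nat \<Rightarrow> real measure) \<Rightarrow> real \<Rightarrow> real \<Rightarrow> ereal" where
  "loss J B v b = (SUP b'\<in>{0..}. ereal (exp_payoff J B v b')) - ereal (exp_payoff J B v b)"

definition indiv_beliefs :: "real \<Rightarrow> real \<Rightarrow> real \<Rightarrow> real measure set" where
  "indiv_beliefs l \<mu> u = {B. prob_space B \<and> sets B = sets borel \<and>
       measure B {0..} = 1 \<and> measure B {l..u} = 1 \<and>
       integrable B (\<lambda>x. x) \<and> (\<integral>x. x \<partial>B) = \<mu>}"

definition belief_set :: "nat set \<Rightarrow> real \<Rightarrow> real \<Rightarrow> real \<Rightarrow> (nat \<Rightarrow> real measure) set" where
  "belief_set J l \<mu> u = {B. \<forall>j\<in>J. B j \<in> indiv_beliefs l \<mu> u}"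

definition max_loss :: "nat set \<Rightarrow> real \<Rightarrow> real \<Rightarrow> real \<Rightarrow> real \<Rightarrow> real \<Rightarrow> ereal" where
  "max_loss J l \<mu> u v b = (SUP B\<in>belief_set J l \<mu> u. loss J B v b)"

definition minimax_loss_bid :: "nat set \<Rightarrow> real \<Rightarrow> real \<Rightarrow> real \<Rightarrow> real \<Rightarrow> real \<Rightarrow> bool" where
  "minimax_loss_bid J l \<mu> u v b \<longleftrightarrow>
     0 \<le> b \<and> (\<forall>b'\<ge>0. max_loss J l \<mu> u v b \<le> max_loss J l \<mu> u v b')"

definition moment_equilibrium ::
  "nat \<Rightarrow> real measure \<Rightarrow> (nat \<Rightarrow> real \<Rightarrow> real) \<Rightarrow> (nat \<Rightarrow> real) \<Rightarrow> (nat \<Rightarrow> real)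
     \<Rightarrow> (nat \<Rightarrow> real) \<Rightarrow> bool" where
  "moment_equilibrium n F \<beta> l \<mu> u \<longleftrightarrow>
     (\<forall>i<n. \<beta> i \<in> borel_measurable borel \<and> (\<forall>v\<in>supp F. 0 \<le> \<beta> i v)) \<and>
     (\<forall>i<n. \<forall>v\<in>supp F. minimax_loss_bid ({0..<n} - {i}) (l i) (\<mu> i) (u i) v (\<beta> i v)) \<and>
     (\<forall>i<n. \<forall>j<n. j \<noteq> i \<longrightarrow> integrable F (\<beta> i) \<and> (\<integral>v. \<beta> i v \<partial>F) = \<mu> j) \<and>
     (\<forall>i<n. \<forall>j<n. j \<noteq> i \<longrightarrow>
        Inf (\<beta> i ` supp F) = l j \<and> Sup (\<beta> i ` supp F) = u j)"

end

theory Submission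
  imports Defs "HOL-Analysis.Analysis" "HOL-Library.Extended_Real"
begin


definition share :: "nat set \<Rightarrow> real \<Rightarrow> (nat \<Rightarrow> real) \<Rightarrow> real" where
  "share J b x = (if \<forall>j\<in>J. x j \<le> b then 1 / real (1 + card {j\<in>J. x j = b}) else 0)"

lemma payoff_share: "payoff J v b x = (v - b) * share J b x"
  unfolding payoff_def share_def by simp

lemma card_filter_sum: "finite J \<Longrightarrow> card {j\<in>J. P j} = (\<Sum>j\<in>J. if P j then 1 else 0)"
  by (simp add: sum.If_cases Int_def)

lemma share_alt: "finite J \<Longrightarrow> share J b x =
   (if \<forall>j\<in>J. x j \<le> b then 1 / (1 + (\<Sum>j\<in>J. if x j = b then 1 else 0)) else 0)"
  unfolding share_def by (simp add: card_filter_sum of_nat_sum if_distrib cong: if_cong)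

lemma share_nonneg: "0 \<le> share J b x" unfolding share_def by simp
lemma share_le1: "share J b x \<le> 1" unfolding share_def by simp

lemma share_upper: "share J b x \<le> (if \<forall>j\<in>J. x j \<le> b then 1 else 0)"
  unfolding share_def by simp

lemma share_lower: "finite J \<Longrightarrow> (if \<forall>j\<in>J. x j < b then 1 else 0) \<le> share J b x"
  unfolding share_def by auto

lemma share_mono: assumes "b1 \<le> b2" shows "share J b1 x \<le> share J b2 x"
proof (cases "b1 = b2")
  case False
  then have lt: "b1 < b2" using assms by simp
  show ?thesis
  proof (cases "\<forall>j\<in>J. x j \<le> b1")
    case True
    then have "{j\<in>J. x j = b2} = {}" using lt by force
    moreover have "\<forall>j\<in>J. x j \<le> b2" using True lt by force
    ultimately have "share J b2 x = 1" unfolding share_def by (simp only: if_True card.empty) simp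
    then show ?thesis using share_le1 by simp
  next
    case False
    then have "share J b1 x = 0" unfolding share_def by auto
    then show ?thesis by (simp add: share_nonneg)
  qed
qed simp

locale prodb =
  fixes J :: "nat set" and B :: "nat \<Rightarrow> real measure"
  assumes finJ: "finite J"
    and PB: "\<And>j. j \<in> J \<Longrightarrow> prob_space (B j)"
    and SB: "\<And>j. j \<in> J \<Longrightarrow> sets (B j) = sets borel"
begin

lemma PS: "prob_space (PiM J B)" by (rule prob_space_PiM) (rule PB)

lemma spB: "j \<in> J \<Longrightarrow> space (B j) = UNIV"
  using SB sets_eq_imp_space_eq by fastforce

lemma comp_meas: "j \<in> J \<Longrightarrow> (\<lambda>x. x j) \<in> borel_measurable (PiM J B)"
  using measurable_component_singleton[of j J B] SB measurable_cong_sets by blast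

lemma share_meas: "share J b \<in> borel_measurable (PiM J B)"
proof -
  have e: "share J b = (\<lambda>x. if \<forall>j\<in>J. x j \<le> b then 1 / (1 + (\<Sum>j\<in>J. if x j = b then 1 else 0)) else 0)"
    using share_alt[OF finJ] by (intro ext) simp
  show ?thesis unfolding e using comp_meas finJ
    by measurable
qed


lemma share_int: "integrable (PiM J B) (share J b)"
proof -
  interpret P: prob_space "PiM J B" by (rule PS)
  show ?thesis by (rule P.integrable_const_bound[where B=1]) (auto simp: share_nonneg share_le1 share_meas)
qed

definition Eb :: "real \<Rightarrow> real" where "Eb b = integral\<^sup>L (PiM J B) (share J b)"

lemma exp_payoff_Eb: "exp_payoff J B v b = (v - b) * Eb b"
  unfolding exp_payoff_def Eb_def payoff_share by simp

lemma Eb_nonneg: "0 \<le> Eb b" unfolding Eb_def by (simp add: share_nonneg)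

lemma Eb_le1: "Eb b \<le> 1"
proof -
  interpret P: prob_space "PiM J B" by (rule PS)
  have "Eb b \<le> integral\<^sup>L (PiM J B) (\<lambda>_. 1)" unfolding Eb_def
    by (rule integral_mono) (auto simp: share_int share_le1)
  then show ?thesis by (simp add: P.prob_space)
qed

lemma Eb_mono: "b1 \<le> b2 \<Longrightarrow> Eb b1 \<le> Eb b2"
  unfolding Eb_def by (rule integral_mono) (auto simp: share_int share_mono)

lemma box_sets: "(\<And>j. j \<in> J \<Longrightarrow> A j \<in> sets borel) \<Longrightarrow> PiE J A \<in> sets (PiM J B)"
  by (rule sets_PiM_I_finite) (auto simp: finJ SB)

lemma box_measure: "(\<And>j. j \<in> J \<Longrightarrow> A j \<in> sets borel) \<Longrightarrow>
     measure (PiM J B) (PiE J A) = (\<Prod>j\<in>J. measure (B j) (A j))"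
proof -
  assume A: "\<And>j. j \<in> J \<Longrightarrow> A j \<in> sets borel"
  let ?M = "\<lambda>i. if i \<in> J then B i else count_space {undefined}"
  interpret M': prob_space "?M i" for i
    using PB by (cases "i \<in> J") (auto intro!: prob_spaceI)
  interpret finite_product_prob_space ?M J
    by unfold_locales (rule finJ)
  have e: "(\<Pi>\<^sub>M i\<in>J. ?M i) = (\<Pi>\<^sub>M i\<in>J. B i)"
    by (intro PiM_cong) auto
  have "measure (\<Pi>\<^sub>M i\<in>J. ?M i) (PiE J A) = (\<Prod>j\<in>J. measure (?M j) (A j))"
    by (rule finite_measure_PiM_emb) (use A SB in auto)
  then show ?thesis unfolding e by simp
qed

lemma Eb_upper: "Eb b \<le> (\<Prod>j\<in>J. measure (B j) {..b})"
proof -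
  interpret P: prob_space "PiM J B" by (rule PS)
  have "Eb b \<le> integral\<^sup>L (PiM J B) (indicator (PiE J (\<lambda>_. {..b})))" unfolding Eb_def
  proof (rule integral_mono)
    show "integrable (PiM J B) (indicator (PiE J (\<lambda>_. {..b})) :: _ \<Rightarrow> real)"
      using box_sets[of "\<lambda>_. {..b}"] by (simp add: P.emeasure_eq_measure)
  qed (auto simp: share_int share_def indicator_def PiE_def extensional_def space_PiM spB)
  also have "\<dots> = (\<Prod>j\<in>J. measure (B j) {..b})"
    using box_sets[of "\<lambda>_. {..b}"] box_measure[of "\<lambda>_. {..b}"] by simp
  finally show ?thesis .
qed

lemma Eb_lower: "(\<Prod>j\<in>J. measure (B j) {..<b}) \<le> Eb b"
proof -
  interpret P: prob_space "PiM J B" by (rule PS)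
  have "(\<Prod>j\<in>J. measure (B j) {..<b}) = integral\<^sup>L (PiM J B) (indicator (PiE J (\<lambda>_. {..<b})))"
    using box_sets[of "\<lambda>_. {..<b}"] box_measure[of "\<lambda>_. {..<b}"] by simp
  also have "\<dots> \<le> Eb b" unfolding Eb_def
  proof (rule integral_mono)
    show "integrable (PiM J B) (indicator (PiE J (\<lambda>_. {..<b})) :: _ \<Rightarrow> real)"
      using box_sets[of "\<lambda>_. {..<b}"] by (simp add: P.emeasure_eq_measure)
    fix x assume "x \<in> space (PiM J B)"
    show "indicator (PiE J (\<lambda>_. {..<b})) x \<le> share J b x"
    proof (cases "x \<in> PiE J (\<lambda>_. {..<b})")
      case True
      then have "\<forall>j\<in>J. x j < b" by auto
      then show ?thesis using True share_lower[OF finJ, of x b] by simp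
    qed (simp add: share_nonneg)
  qed (auto simp: share_int)
  finally show ?thesis .
qed

end


definition TP :: "real \<Rightarrow> real \<Rightarrow> real \<Rightarrow> real measure" where
  "TP lo hi q = distr (measure_pmf (bernoulli_pmf q)) borel (\<lambda>c. if c then lo else hi)"

lemma TP_sets: "sets (TP lo hi q) = sets borel" unfolding TP_def by simp

lemma TP_prob: "prob_space (TP lo hi q)"
  unfolding TP_def by (rule prob_space.prob_space_distr) (auto simp: measure_pmf.prob_space_axioms)

lemma bern_measure: assumes "0 \<le> q" "q \<le> 1"
  shows "measure (measure_pmf (bernoulli_pmf q)) A = q * indicator A True + (1 - q) * indicator A False"
proof -
  have "measure (measure_pmf (bernoulli_pmf q)) A = integral\<^sup>L (measure_pmf (bernoulli_pmf q)) (indicator A)"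
    by simp
  also have "\<dots> = indicator A True * q + indicator A False * (1 - q)"
    by (rule integral_bernoulli_pmf[OF assms])
  also have "\<dots> = q * indicator A True + (1 - q) * indicator A False"
    by (simp add: mult.commute)
  finally show ?thesis .
qed

lemma TP_measure: assumes "0 \<le> q" "q \<le> 1" "A \<in> sets borel"
  shows "measure (TP lo hi q) A = q * indicator A lo + (1 - q) * indicator A hi"
proof -
  have "measure (TP lo hi q) A = measure (measure_pmf (bernoulli_pmf q)) ((\<lambda>c. if c then lo else hi) -` A)"
    unfolding TP_def using assms by (subst measure_distr) auto
  also have "\<dots> = q * indicator A lo + (1 - q) * indicator A hi"
    using assms by (simp add: bern_measure indicator_def)
  finally show ?thesis .
qed

lemma TP_integral: assumes "0 \<le> q" "q \<le> 1"
  shows "integrable (TP lo hi q) (\<lambda>x. x)" "(\<integral>x. x \<partial>TP lo hi q) = q * lo + (1 - q) * hi"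
proof -
  show "integrable (TP lo hi q) (\<lambda>x. x)" unfolding TP_def
    by (subst integrable_distr_eq) (auto intro!: integrable_measure_pmf_finite)
  show "(\<integral>x. x \<partial>TP lo hi q) = q * lo + (1 - q) * hi" unfolding TP_def
    using assms by (subst integral_distr) (auto simp: mult.commute)
qed

lemma TP_belief:
  assumes "0 \<le> q" "q \<le> 1" "0 \<le> l" "l \<le> lo" "lo \<le> u" "l \<le> hi" "hi \<le> u"
    and "q * lo + (1 - q) * hi = \<mu>"
  shows "TP lo hi q \<in> indiv_beliefs l \<mu> u"
  unfolding indiv_beliefs_def using assms
  by (auto simp: TP_prob TP_sets TP_measure TP_integral)


context
  fixes B l \<mu> u assumes Bb: "B \<in> indiv_beliefs l \<mu> u"
begin

lemma bP: "prob_space B" using Bb unfolding indiv_beliefs_def by auto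
lemma bS: "sets B = sets borel" using Bb unfolding indiv_beliefs_def by auto
lemma bI: "integrable B (\<lambda>x. x)" using Bb unfolding indiv_beliefs_def by auto
lemma bM: "(\<integral>x. x \<partial>B) = \<mu>" using Bb unfolding indiv_beliefs_def by auto
lemma bAE: "AE x in B. l \<le> x \<and> x \<le> u"
proof -
  interpret prob_space B by (rule bP)
  have "prob {l..u} = 1" using Bb unfolding indiv_beliefs_def by auto
  then have "AE x in B. x \<in> {l..u}" by (rule AE_prob_1)
  then show ?thesis by auto
qed

lemma bsets[measurable]: "A \<in> sets borel \<Longrightarrow> A \<in> sets B" using bS by simp

lemma markov_lo: assumes "a \<le> u" shows "(u - a) * measure B {..a} \<le> u - \<mu>"
proof -
  interpret prob_space B by (rule bP)
  have "(u - a) * measure B {..a} = integral\<^sup>L B (\<lambda>x. (u - a) * indicator {..a} x)"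
    by simp
  also have "\<dots> \<le> integral\<^sup>L B (\<lambda>x. u - x)"
  proof (rule integral_mono_AE)
    show "integrable B (\<lambda>x. (u - a) * indicator {..a} x)"
      by (intro integrable_mult_right integrable_real_indicator) (auto simp: emeasure_eq_measure)
    show "integrable B (\<lambda>x. u - x)" using bI by auto
    show "AE x in B. (u - a) * indicator {..a} x \<le> u - x"
      using bAE by eventually_elim (use assms in \<open>auto simp: indicator_def\<close>)
  qed
  also have "\<dots> = u - \<mu>" using bI bM prob_space by (simp add: integral_diff)
  finally show ?thesis .
qed

lemma markov_hi: assumes "l \<le> b" shows "(b - l) * measure B {b..} \<le> \<mu> - l"
proof -
  interpret prob_space B by (rule bP)
  have "(b - l) * measure B {b..} = integral\<^sup>L B (\<lambda>x. (b - l) * indicator {b..} x)"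
    by simp
  also have "\<dots> \<le> integral\<^sup>L B (\<lambda>x. x - l)"
  proof (rule integral_mono_AE)
    show "integrable B (\<lambda>x. (b - l) * indicator {b..} x)"
      by (intro integrable_mult_right integrable_real_indicator) (auto simp: emeasure_eq_measure)
    show "integrable B (\<lambda>x. x - l)" using bI by auto
    show "AE x in B. (b - l) * indicator {b..} x \<le> x - l"
      using bAE by eventually_elim (use assms in \<open>auto simp: indicator_def\<close>)
  qed
  also have "\<dots> = \<mu> - l" using bI bM prob_space by (simp add: integral_diff)
  finally show ?thesis .
qed

lemma lt_lower: assumes "l < b" shows "(b - \<mu>) / (b - l) \<le> measure B {..<b}"
proof -
  interpret prob_space B by (rule bP)
  have c: "measure B {..<b} = 1 - measure B {b..}"
    using prob_compl[of "{b..}"] by (simp add: Compl_eq_Diff_UNIV[symmetric] bS sets_eq_imp_space_eq[OF bS] Compl_atLeast)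
  have "measure B {b..} \<le> (\<mu> - l) / (b - l)"
    using markov_hi[of b] assms by (simp add: field_simps)
  then show ?thesis unfolding c using assms by (simp add: field_simps)
qed

lemma le_upper: assumes "a < u" shows "measure B {..a} \<le> (u - \<mu>) / (u - a)"
  using markov_lo[of a] assms by (simp add: field_simps)

lemma below_l: assumes "a < l" shows "measure B {..a} = 0"
proof -
  interpret prob_space B by (rule bP)
  have "AE x in B. x \<notin> {..a}" using bAE by eventually_elim (use assms in auto)
  then have "emeasure B {..a} = 0" by (subst AE_iff_measurable[symmetric]) (auto simp: sets_eq_imp_space_eq[OF bS])
  then show ?thesis by (simp add: emeasure_eq_measure)
qed

lemma mu_range: "l \<le> \<mu> \<and> \<mu> \<le> u"
proof -
  interpret prob_space B by (rule bP)
  have "integral\<^sup>L B (\<lambda>_. l) \<le> integral\<^sup>L B (\<lambda>x. x)"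
    by (rule integral_mono_AE) (use bI bAE in auto)
  moreover have "integral\<^sup>L B (\<lambda>x. x) \<le> integral\<^sup>L B (\<lambda>_. u)"
    by (rule integral_mono_AE) (use bI bAE in auto)
  ultimately show ?thesis using bM by (simp add: prob_space)
qed

end


lemma belief_prodb: "finite J \<Longrightarrow> B \<in> belief_set J l \<mu> u \<Longrightarrow> prodb J B"
  unfolding belief_set_def prodb_def using bP bS by blast

lemma prod_le_pow:
  fixes f :: "nat \<Rightarrow> real"
  assumes "finite J" "\<And>j. j \<in> J \<Longrightarrow> 0 \<le> f j \<and> f j \<le> c"
  shows "prod f J \<le> c ^ card J"
proof -
  have "prod f J \<le> (\<Prod>j\<in>J. c)" by (rule prod_mono) (use assms in auto)
  then show ?thesis by simp
qed

lemma pow_le_prod: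
  fixes f :: "nat \<Rightarrow> real"
  assumes "finite J" "0 \<le> c" "\<And>j. j \<in> J \<Longrightarrow> c \<le> f j"
  shows "c ^ card J \<le> prod f J"
proof -
  have "(\<Prod>j\<in>J. c) \<le> prod f J" by (rule prod_mono) (use assms in auto)
  then show ?thesis by simp
qed

lemma loss_le_ereal:
  assumes "\<And>b'. 0 \<le> b' \<Longrightarrow> exp_payoff J B v b' \<le> exp_payoff J B v b + R"
  shows "loss J B v b \<le> ereal R"
proof -
  have "(SUP b'\<in>{0..}. ereal (exp_payoff J B v b')) \<le> ereal (exp_payoff J B v b + R)"
    by (rule SUP_least) (use assms in auto)
  then show ?thesis unfolding loss_def
    by (simp add: ereal_minus_le_iff algebra_simps)
qed

lemma loss_ge:
  assumes "0 \<le> b'" shows "ereal (exp_payoff J B v b' - exp_payoff J B v b) \<le> loss J B v b"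
proof -
  have "ereal (exp_payoff J B v b') \<le> (SUP b'\<in>{0..}. ereal (exp_payoff J B v b'))"
    by (rule SUP_upper) (use assms in auto)
  then show ?thesis unfolding loss_def
    by (simp add: ereal_le_minus_iff algebra_simps)
qed

lemma loss_UB:
  assumes J: "finite J" "J \<noteq> {}" "card J = m" and par: "0 \<le> l" "l < \<mu>" "\<mu> < u" "l \<le> b" "b \<le> v"
    and Bb: "B \<in> belief_set J l \<mu> u" and R0: "0 \<le> R"
    and h1: "\<And>a. l \<le> a \<Longrightarrow> a \<le> b \<Longrightarrow> a \<le> \<mu> \<Longrightarrow> (b - a) * ((u-\<mu>)/(u-a))^m \<le> R"
    and h2: "\<mu> \<le> b \<Longrightarrow> (v - b) * (1 - ((b-\<mu>)/(b-l))^m) \<le> R"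
    and h3: "\<And>x. b < \<mu> \<Longrightarrow> b \<le> x \<Longrightarrow> x \<le> \<mu> \<Longrightarrow> (v - x) * ((u-\<mu>)/(u-x))^m \<le> R"
  shows "loss J B v b \<le> ereal R"
proof (rule loss_le_ereal)
  interpret prodb J B by (rule belief_prodb[OF J(1) Bb])
  have Bj: "\<And>j. j \<in> J \<Longrightarrow> B j \<in> indiv_beliefs l \<mu> u" using Bb unfolding belief_set_def by auto
  fix b' :: real assume b'0: "0 \<le> b'"
  let ?U = "\<lambda>t. exp_payoff J B v t"
  have U: "\<And>t. ?U t = (v - t) * Eb t" by (rule exp_payoff_Eb)
  have Ub0: "0 \<le> ?U b" unfolding U using par Eb_nonneg by simp
  have upH: "Eb t \<le> ((u-\<mu>)/(u-t))^m" if "t < u" for t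
  proof -
    have "Eb t \<le> (\<Prod>j\<in>J. measure (B j) {..t})" by (rule Eb_upper)
    also have "\<dots> \<le> ((u-\<mu>)/(u-t))^card J"
      by (rule prod_le_pow) (use J that le_upper[OF Bj] measure_nonneg in auto)
    finally show ?thesis using J by simp
  qed
  show "?U b' \<le> ?U b + R"
  proof (cases "b' < b")
    case True
    have "?U b' - ?U b \<le> (b - b') * Eb b'"
    proof -
      have "Eb b' \<le> Eb b" using True by (intro Eb_mono) simp
      then have "(v - b) * Eb b' \<le> (v - b) * Eb b" using par by (intro mult_left_mono) auto
      then show ?thesis unfolding U by (simp add: algebra_simps)
    qed
    also have "\<dots> \<le> R"
    proof (cases "b' < l")
      case True
      obtain j where j: "j \<in> J" using J by auto
      have "(\<Prod>j\<in>J. measure (B j) {..b'}) = 0"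
        using j J True below_l[OF Bj] by (intro prod_zero) auto
      then have "Eb b' = 0" using Eb_upper[of b'] Eb_nonneg[of b'] by simp
      then show ?thesis using R0 by simp
    next
      case False
      show ?thesis
      proof (cases "b' < \<mu>")
        case True
        have "(b - b') * Eb b' \<le> (b - b') * ((u-\<mu>)/(u-b'))^m"
          using upH[of b'] True par \<open>b' < b\<close> by (intro mult_left_mono) auto
        also have "\<dots> \<le> R" using h1[of b'] False True \<open>b' < b\<close> by simp
        finally show ?thesis .
      next
        case False
        have "(b - b') * Eb b' \<le> (b - b') * 1"
          using Eb_le1 \<open>b' < b\<close> by (intro mult_left_mono) auto
        also have "\<dots> \<le> (b - \<mu>) * ((u-\<mu>)/(u-\<mu>))^m" using False par by simp
        also have "\<dots> \<le> R" using h1[of \<mu>] False par \<open>b' < b\<close> by simp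
        finally show ?thesis .
      qed
    qed
    finally show ?thesis by simp
  next
    case False
    show ?thesis
    proof (cases "v \<le> b'")
      case True
      have "?U b' \<le> 0" unfolding U using True Eb_nonneg[of b'] by (simp add: mult_nonpos_nonneg)
      then show ?thesis using Ub0 R0 by simp
    next
      case vb: False
      show ?thesis
      proof (cases "\<mu> \<le> b")
        case True
        have "?U b' \<le> v - b" unfolding U using Eb_le1[of b'] Eb_nonneg[of b'] vb False
          by (smt (verit) mult_left_le)
        moreover have "(v - b) * ((b-\<mu>)/(b-l))^m \<le> ?U b"
        proof -
          have "((b-\<mu>)/(b-l))^m \<le> (\<Prod>j\<in>J. measure (B j) {..<b})"
            using J True par by (auto intro!: pow_le_prod lt_lower[OF Bj])
          also have "\<dots> \<le> Eb b" by (rule Eb_lower)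
          finally show ?thesis unfolding U using par by (intro mult_left_mono) auto
        qed
        ultimately have "?U b' - ?U b \<le> (v - b) * (1 - ((b-\<mu>)/(b-l))^m)"
          by (simp add: algebra_simps)
        then show ?thesis using h2 True by simp
      next
        case bmu: False
        show ?thesis
        proof (cases "b' < \<mu>")
          case True
          have "?U b' \<le> (v - b') * ((u-\<mu>)/(u-b'))^m"
            unfolding U using upH[of b'] True par vb by (intro mult_left_mono) auto
          also have "\<dots> \<le> R" using h3[of b'] bmu True False by simp
          finally show ?thesis using Ub0 by simp
        next
          case False
          have "?U b' \<le> v - b'" unfolding U using Eb_le1[of b'] Eb_nonneg[of b'] vb
            by (smt (verit) mult_left_le)
          also have "\<dots> \<le> (v - \<mu>) * ((u-\<mu>)/(u-\<mu>))^m" using False par by simp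
          also have "\<dots> \<le> R" using h3[of \<mu>] bmu par by simp
          finally show ?thesis using Ub0 by simp
        qed
      qed
    qed
  qed
qed


lemma max_loss_ge: "B \<in> belief_set J l \<mu> u \<Longrightarrow> loss J B v b \<le> max_loss J l \<mu> u v b"
  unfolding max_loss_def by (rule SUP_upper)

lemma TP_prodb: "finite J \<Longrightarrow> prodb J (\<lambda>_. TP lo hi q)"
  unfolding prodb_def by (auto simp: TP_prob TP_sets)

lemma Eb_TP:
  assumes J: "finite J" and q: "0 \<le> q" "q \<le> 1"
    and r1: "measure (TP lo hi q) {..t} = r" and r2: "measure (TP lo hi q) {..<t} = r"
  shows "prodb.Eb J (\<lambda>_. TP lo hi q) t = r ^ card J"
proof -
  interpret prodb J "\<lambda>_. TP lo hi q" by (rule TP_prodb[OF J])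
  have "Eb t \<le> r ^ card J" using Eb_upper[of t] r1 by simp
  moreover have "r ^ card J \<le> Eb t" using Eb_lower[of t] r2 by simp
  ultimately show ?thesis by simp
qed

lemma TP_in_set:
  assumes "0 \<le> q" "q \<le> 1" "0 \<le> l" "l \<le> lo" "lo \<le> u" "l \<le> hi" "hi \<le> u"
    and "q * lo + (1 - q) * hi = \<mu>"
  shows "(\<lambda>_. TP lo hi q) \<in> belief_set J l \<mu> u"
  unfolding belief_set_def using TP_belief[OF assms] by auto

lemma LB1:
  assumes J: "finite J" "card J = m" and par: "0 \<le> l" "l \<le> a" "a \<le> \<mu>" "\<mu> < u" "a < b'" "b' < b"
    and bu: "b < u \<or> a = \<mu>"
  shows "ereal ((b - b') * ((u-\<mu>)/(u-a))^m) \<le> max_loss J l \<mu> u v b"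
proof -
  define q where "q = (u-\<mu>)/(u-a)"
  have q: "0 \<le> q" "q \<le> 1" using par unfolding q_def by auto
  have qq: "q * (u - a) = u - \<mu>" using par unfolding q_def by simp
  have mean: "q * a + (1 - q) * u = \<mu>"
  proof -
    have "q * a + (1 - q) * u = u - q * (u - a)" by (simp add: algebra_simps)
    then show ?thesis using qq by simp
  qed
  have Bin: "(\<lambda>_. TP a u q) \<in> belief_set J l \<mu> u"
    by (rule TP_in_set) (use q par mean in auto)
  interpret prodb J "\<lambda>_. TP a u q" by (rule TP_prodb[OF J(1)])
  have q1: "a = \<mu> \<Longrightarrow> q = 1" using par unfolding q_def by simp
  have E: "Eb t = q ^ m" if "a < t" "t \<le> b" for t
  proof -
    have "measure (TP a u q) {..t} = q" "measure (TP a u q) {..<t} = q"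
      using that bu q1 par q by (auto simp: TP_measure indicator_def)
    then show ?thesis using Eb_TP[OF J(1) q] J by simp
  qed
  have "ereal ((b - b') * q^m) = ereal (exp_payoff J (\<lambda>_. TP a u q) v b' - exp_payoff J (\<lambda>_. TP a u q) v b)"
    using E[of b'] E[of b] par by (simp add: exp_payoff_Eb algebra_simps)
  also have "\<dots> \<le> loss J (\<lambda>_. TP a u q) v b" by (rule loss_ge) (use par in auto)
  also have "\<dots> \<le> max_loss J l \<mu> u v b" by (rule max_loss_ge[OF Bin])
  finally show ?thesis unfolding q_def .
qed

lemma LB2:
  assumes J: "finite J" "card J = m" and par: "0 \<le> l" "l < \<mu>" "\<mu> \<le> b" "b < c" "c \<le> u" "c < b'"
  shows "ereal ((v - b') - (v - b) * ((c-\<mu>)/(c-l))^m) \<le> max_loss J l \<mu> u v b"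
proof -
  define q where "q = (c-\<mu>)/(c-l)"
  have q: "0 \<le> q" "q \<le> 1" using par unfolding q_def by auto
  have qq: "q * (c - l) = c - \<mu>" using par unfolding q_def by simp
  have mean: "q * l + (1 - q) * c = \<mu>"
  proof -
    have "q * l + (1 - q) * c = c - q * (c - l)" by (simp add: algebra_simps)
    then show ?thesis using qq by simp
  qed
  have Bin: "(\<lambda>_. TP l c q) \<in> belief_set J l \<mu> u"
    by (rule TP_in_set) (use q par mean in auto)
  interpret prodb J "\<lambda>_. TP l c q" by (rule TP_prodb[OF J(1)])
  have "measure (TP l c q) {..b} = q" "measure (TP l c q) {..<b} = q"
    using par q by (auto simp: TP_measure indicator_def)
  then have Eb1: "Eb b = q ^ m" using Eb_TP[OF J(1) q] J by simp
  have "measure (TP l c q) {..b'} = 1" "measure (TP l c q) {..<b'} = 1"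
    using par q by (auto simp: TP_measure indicator_def)
  then have Eb2: "Eb b' = 1" using Eb_TP[OF J(1) q] J by simp
  have "ereal ((v - b') - (v - b) * q^m) = ereal (exp_payoff J (\<lambda>_. TP l c q) v b' - exp_payoff J (\<lambda>_. TP l c q) v b)"
    using Eb1 Eb2 by (simp add: exp_payoff_Eb algebra_simps)
  also have "\<dots> \<le> loss J (\<lambda>_. TP l c q) v b" by (rule loss_ge) (use par in auto)
  also have "\<dots> \<le> max_loss J l \<mu> u v b" by (rule max_loss_ge[OF Bin])
  finally show ?thesis unfolding q_def .
qed

lemma LB3:
  assumes J: "finite J" "card J = m" "J \<noteq> {}" and par: "0 \<le> l" "l \<le> c" "b < c" "c \<le> \<mu>" "\<mu> < u" "c < b'" "b' < u"
  shows "ereal ((v - b') * ((u-\<mu>)/(u-c))^m) \<le> max_loss J l \<mu> u v b"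
proof -
  define q where "q = (u-\<mu>)/(u-c)"
  have q: "0 \<le> q" "q \<le> 1" using par unfolding q_def by auto
  have qq: "q * (u - c) = u - \<mu>" using par unfolding q_def by simp
  have mean: "q * c + (1 - q) * u = \<mu>"
  proof -
    have "q * c + (1 - q) * u = u - q * (u - c)" by (simp add: algebra_simps)
    then show ?thesis using qq by simp
  qed
  have Bin: "(\<lambda>_. TP c u q) \<in> belief_set J l \<mu> u"
    by (rule TP_in_set) (use q par mean in auto)
  interpret prodb J "\<lambda>_. TP c u q" by (rule TP_prodb[OF J(1)])
  have "measure (TP c u q) {..b} = 0" "measure (TP c u q) {..<b} = 0"
    using par q by (auto simp: TP_measure indicator_def)
  moreover have "0 < m" using J card_gt_0_iff by blast
  ultimately have Eb1: "Eb b = 0" using Eb_TP[OF J(1) q] J by simp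
  have "measure (TP c u q) {..b'} = q" "measure (TP c u q) {..<b'} = q"
    using par q by (auto simp: TP_measure indicator_def)
  then have Eb2: "Eb b' = q ^ m" using Eb_TP[OF J(1) q] J by simp
  have "ereal ((v - b') * q^m) = ereal (exp_payoff J (\<lambda>_. TP c u q) v b' - exp_payoff J (\<lambda>_. TP c u q) v b)"
    using Eb1 Eb2 by (simp add: exp_payoff_Eb algebra_simps)
  also have "\<dots> \<le> loss J (\<lambda>_. TP c u q) v b" by (rule loss_ge) (use par in auto)
  also have "\<dots> \<le> max_loss J l \<mu> u v b" by (rule max_loss_ge[OF Bin])
  finally show ?thesis unfolding q_def .
qed


lemma ereal_limit_right:
  fixes g :: "real \<Rightarrow> real" and X :: ereal
  assumes t: "ta < tb" and gc: "continuous_on {ta..tb} g"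
    and le: "\<And>t. ta < t \<Longrightarrow> t < tb \<Longrightarrow> ereal (g t) \<le> X"
  shows "ereal (g ta) \<le> X"
proof (cases X)
  case (real r)
  have cl: "closed {t \<in> {ta..tb}. g t \<le> r}"
    by (rule continuous_on_closed_Collect_le) (use gc in auto)
  have sub: "{ta<..<tb} \<subseteq> {t \<in> {ta..tb}. g t \<le> r}" using le real by auto
  have "closure {ta<..<tb} \<subseteq> {t \<in> {ta..tb}. g t \<le> r}"
    by (rule closure_minimal[OF sub cl])
  moreover have "ta \<in> {ta..tb}" using t by auto
  ultimately have "ta \<in> {t \<in> {ta..tb}. g t \<le> r}" using t by (metis closure_greaterThanLessThan subsetD)
  then show ?thesis using real by simp
next
  case PInf then show ?thesis by simp
next
  case MInf
  have "ereal (g ((ta+tb)/2)) \<le> X" using le t by simp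
  then show ?thesis using MInf by simp
qed

lemma sup_int_bdd:
  fixes f :: "real \<Rightarrow> real"
  assumes "continuous_on {lo..hi} f" shows "bdd_above (f ` {lo..hi})"
  using assms by (intro bounded_imp_bdd_above compact_imp_bounded compact_continuous_image) auto

lemma sup_int_ge:
  fixes f :: "real \<Rightarrow> real"
  assumes "lo \<le> x" "x \<le> hi" "continuous_on {lo..hi} f"
  shows "f x \<le> Sup (f ` {lo..hi})"
  by (rule cSup_upper) (use assms sup_int_bdd in auto)

lemma sup_int_le:
  fixes f :: "real \<Rightarrow> real"
  assumes "lo \<le> hi" "\<And>x. lo \<le> x \<Longrightarrow> x \<le> hi \<Longrightarrow> f x \<le> R"
  shows "Sup (f ` {lo..hi}) \<le> R"
  by (rule cSup_least) (use assms in auto)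

lemma cont_sup:
  fixes f :: "real \<Rightarrow> 'a::metric_space \<Rightarrow> real"
  assumes P: "compact P" and lo: "continuous_on P lo" and hi: "continuous_on P hi"
    and le: "\<And>p. p \<in> P \<Longrightarrow> lo p \<le> hi p"
    and f: "continuous_on {z. snd z \<in> P \<and> fst z \<in> {lo (snd z)..hi (snd z)}} (\<lambda>z. f (fst z) (snd z))"
  shows "continuous_on P (\<lambda>p. Sup ((\<lambda>x. f x p) ` {lo p..hi p}))"
proof -
  define g where "g z = f (lo (snd z) + fst z * (hi (snd z) - lo (snd z))) (snd z)" for z :: "real \<times> 'a"
  define K where "K = {0..1::real} \<times> P"
  have gc: "continuous_on K g"
  proof -
    have c1: "continuous_on K (\<lambda>z. (lo (snd z) + fst z * (hi (snd z) - lo (snd z)), snd z))"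
      unfolding K_def
      by (intro continuous_intros continuous_on_compose2[OF lo] continuous_on_compose2[OF hi]) auto
    have sub: "(\<lambda>z. (lo (snd z) + fst z * (hi (snd z) - lo (snd z)), snd z)) ` K
        \<subseteq> {z. snd z \<in> P \<and> fst z \<in> {lo (snd z)..hi (snd z)}}"
    proof (rule image_subsetI)
      fix z assume "z \<in> K"
      then have tp: "0 \<le> fst z" "fst z \<le> 1" "snd z \<in> P" unfolding K_def by auto
      have "0 \<le> fst z * (hi (snd z) - lo (snd z))" using tp le[of "snd z"] by simp
      moreover have "fst z * (hi (snd z) - lo (snd z)) \<le> 1 * (hi (snd z) - lo (snd z))"
        using tp le[of "snd z"] by (intro mult_right_mono) auto
      ultimately show "(lo (snd z) + fst z * (hi (snd z) - lo (snd z)), snd z)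
          \<in> {z. snd z \<in> P \<and> fst z \<in> {lo (snd z)..hi (snd z)}}"
        using tp by simp
    qed
    have "continuous_on K ((\<lambda>z. f (fst z) (snd z)) \<circ> (\<lambda>z. (lo (snd z) + fst z * (hi (snd z) - lo (snd z)), snd z)))"
      by (rule continuous_on_compose[OF c1 continuous_on_subset[OF f sub]])
    then show ?thesis unfolding g_def o_def by simp
  qed
  have gp: "continuous_on {0..1} (\<lambda>t. g (t, p))" if "p \<in> P" for p
  proof -
    have "continuous_on {0..1} (g \<circ> (\<lambda>t. (t, p)))"
      by (rule continuous_on_compose[OF _ continuous_on_subset[OF gc]])
         (use that in \<open>auto simp: K_def intro!: continuous_intros\<close>)
    then show ?thesis by (simp add: o_def)
  qed
  have img: "(\<lambda>x. f x p) ` {lo p..hi p} = (\<lambda>t. g (t, p)) ` {0..1}" if "p \<in> P" for p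
  proof
    show "(\<lambda>t. g (t, p)) ` {0..1} \<subseteq> (\<lambda>x. f x p) ` {lo p..hi p}"
    proof clarify
      fix t :: real assume t: "t \<in> {0..1}"
      have "0 \<le> t * (hi p - lo p)" using t le[OF that] by simp
      moreover have "t * (hi p - lo p) \<le> 1 * (hi p - lo p)"
        using t le[OF that] by (intro mult_right_mono) auto
      ultimately show "g (t, p) \<in> (\<lambda>x. f x p) ` {lo p..hi p}" unfolding g_def by auto
    qed
    show "(\<lambda>x. f x p) ` {lo p..hi p} \<subseteq> (\<lambda>t. g (t, p)) ` {0..1}"
    proof clarify
      fix x assume x: "x \<in> {lo p..hi p}"
      show "f x p \<in> (\<lambda>t. g (t, p)) ` {0..1}"
      proof (cases "hi p = lo p")
        case True
        then have "x = lo p" using x by auto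
        then show ?thesis unfolding g_def using True by (auto intro!: image_eqI[where x=0])
      next
        case False
        then have pos: "hi p - lo p > 0" using le[OF that] by simp
        define t where "t = (x - lo p) / (hi p - lo p)"
        have "t \<in> {0..1}" using x pos unfolding t_def by (auto simp: field_simps)
        moreover have "lo p + t * (hi p - lo p) = x" using pos unfolding t_def by simp
        ultimately show ?thesis unfolding g_def by (auto intro!: image_eqI[where x=t])
      qed
    qed
  qed
  have bdd: "bdd_above ((\<lambda>t. g (t, p)) ` {0..1})" if "p \<in> P" for p
    using gp[OF that] by (intro bounded_imp_bdd_above compact_imp_bounded compact_continuous_image) auto
  have uc: "uniformly_continuous_on K g"
    by (rule compact_uniformly_continuous[OF gc]) (simp add: K_def compact_Times P)
  have cmp: "Sup ((\<lambda>t. g (t, p')) ` {0..1}) \<le> Sup ((\<lambda>t. g (t, p)) ` {0..1}) + e"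
    if "p \<in> P" "p' \<in> P" "\<And>t. t \<in> {0..1} \<Longrightarrow> g (t, p') \<le> g (t, p) + e" for p p' e
  proof (rule cSup_least)
    show "(\<lambda>t. g (t, p')) ` {0..1} \<noteq> {}" by auto
    fix y assume "y \<in> (\<lambda>t. g (t, p')) ` {0..1}"
    then obtain t where t: "t \<in> {0..1}" "y = g (t, p')" by auto
    have "g (t, p) \<le> Sup ((\<lambda>t. g (t, p)) ` {0..1})"
      by (rule cSup_upper) (use t bdd[OF that(1)] in auto)
    then show "y \<le> Sup ((\<lambda>t. g (t, p)) ` {0..1}) + e" using that(3)[OF t(1)] t by simp
  qed
  show ?thesis
    unfolding continuous_on_iff
  proof (intro ballI allI impI)
    fix p e assume p: "p \<in> P" and e: "(e::real) > 0"
    obtain d where d: "d > 0" "\<And>z z'. z \<in> K \<Longrightarrow> z' \<in> K \<Longrightarrow> dist z' z < d \<Longrightarrow> dist (g z') (g z) < e/2"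
      using uc e unfolding uniformly_continuous_on_def by (meson half_gt_zero)
    show "\<exists>d>0. \<forall>p'\<in>P. dist p' p < d \<longrightarrow>
        dist (Sup ((\<lambda>x. f x p') ` {lo p'..hi p'})) (Sup ((\<lambda>x. f x p) ` {lo p..hi p})) < e"
    proof (intro exI[of _ d] conjI ballI impI)
      show "d > 0" by (rule d)
      fix p' assume p': "p' \<in> P" and dp: "dist p' p < d"
      have close: "dist (g (t, p')) (g (t, p)) < e/2" if "t \<in> {0..1}" for t
        by (rule d(2)) (use that p p' dp in \<open>auto simp: K_def dist_Pair_Pair\<close>)
      have "Sup ((\<lambda>t. g (t, p')) ` {0..1}) \<le> Sup ((\<lambda>t. g (t, p)) ` {0..1}) + e/2"
      proof (rule cmp[OF p p'])
        fix t :: real assume "t \<in> {0..1}"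
        then show "g (t, p') \<le> g (t, p) + e/2" using close[of t] unfolding dist_real_def by linarith
      qed
      moreover have "Sup ((\<lambda>t. g (t, p)) ` {0..1}) \<le> Sup ((\<lambda>t. g (t, p')) ` {0..1}) + e/2"
      proof (rule cmp[OF p' p])
        fix t :: real assume "t \<in> {0..1}"
        then show "g (t, p) \<le> g (t, p') + e/2" using close[of t] unfolding dist_real_def by linarith
      qed
      ultimately show "dist (Sup ((\<lambda>x. f x p') ` {lo p'..hi p'})) (Sup ((\<lambda>x. f x p) ` {lo p..hi p})) < e"
        using img[OF p] img[OF p'] e by (simp add: dist_real_def abs_less_iff)
    qed
  qed
qed

lemma cont_root:
  fixes h :: "real \<Rightarrow> 'a::metric_space \<Rightarrow> real" and r :: "'a \<Rightarrow> real"
  assumes hc: "continuous_on ({xa..xb} \<times> P) (\<lambda>z. h (fst z) (snd z))"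
    and mono: "\<And>p x y. p \<in> P \<Longrightarrow> xa \<le> x \<Longrightarrow> x < y \<Longrightarrow> y \<le> xb \<Longrightarrow> h x p < h y p"
    and rootf: "\<And>p. p \<in> P \<Longrightarrow> xa \<le> r p \<and> r p \<le> xb \<and> h (r p) p = 0"
  shows "continuous_on P r"
proof -
  have hx: "continuous_on P (\<lambda>q. h a q)" if "a \<in> {xa..xb}" for a
  proof -
    have "continuous_on P ((\<lambda>z. h (fst z) (snd z)) \<circ> (\<lambda>q. (a, q)))"
      by (rule continuous_on_compose[OF _ continuous_on_subset[OF hc]])
         (use that in \<open>auto intro!: continuous_intros\<close>)
    then show ?thesis by (simp add: o_def)
  qed
  have lower: "\<exists>d>0. \<forall>p'\<in>P. dist p' p < d \<longrightarrow> a < r p'" if p: "p \<in> P" and a: "a < r p" for p a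
  proof (cases "a < xa")
    case True
    then show ?thesis using rootf by (intro exI[of _ 1]) force
  next
    case False
    then have aI: "a \<in> {xa..xb}" using rootf[OF p] a by auto
    have neg: "h a p < 0" using mono[OF p _ a] rootf[OF p] False by auto
    obtain d where d: "d > 0" "\<forall>p'\<in>P. dist p' p < d \<longrightarrow> dist (h a p') (h a p) < - h a p"
      using hx[OF aI] p neg unfolding continuous_on_iff by (meson neg_0_less_iff_less)
    show ?thesis
    proof (intro exI[of _ d] conjI ballI impI)
      fix p' assume p': "p' \<in> P" "dist p' p < d"
      then have "h a p' < 0" using d by (auto simp: dist_real_def)
      show "a < r p'"
      proof (rule ccontr)
        assume "\<not> a < r p'"
        then have "r p' = a \<or> r p' < a" by auto
        then show False
        proof
          assume "r p' = a" then show False using rootf[OF p'(1)] \<open>h a p' < 0\<close> by simp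
        next
          assume "r p' < a" then have "h (r p') p' < h a p'" using mono[OF p'(1), of "r p'" a] rootf[OF p'(1)] aI by auto
          then show False using rootf[OF p'(1)] \<open>h a p' < 0\<close> by simp
        qed
      qed
    qed (rule d)
  qed
  have upper: "\<exists>d>0. \<forall>p'\<in>P. dist p' p < d \<longrightarrow> r p' < a" if p: "p \<in> P" and a: "r p < a" for p a
  proof (cases "xb < a")
    case True
    then show ?thesis using rootf by (intro exI[of _ 1]) force
  next
    case False
    then have aI: "a \<in> {xa..xb}" using rootf[OF p] a by auto
    have pos: "0 < h a p" using mono[OF p _ a] rootf[OF p] False by auto
    obtain d where d: "d > 0" "\<forall>p'\<in>P. dist p' p < d \<longrightarrow> dist (h a p') (h a p) < h a p"
      using hx[OF aI] p pos unfolding continuous_on_iff by meson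
    show ?thesis
    proof (intro exI[of _ d] conjI ballI impI)
      fix p' assume p': "p' \<in> P" "dist p' p < d"
      then have "0 < h a p'" using d by (auto simp: dist_real_def)
      show "r p' < a"
      proof (rule ccontr)
        assume "\<not> r p' < a"
        then have "r p' = a \<or> a < r p'" by auto
        then show False
        proof
          assume "r p' = a" then show False using rootf[OF p'(1)] \<open>0 < h a p'\<close> by simp
        next
          assume "a < r p'" then have "h a p' < h (r p') p'" using mono[OF p'(1), of a "r p'"] rootf[OF p'(1)] aI by auto
          then show False using rootf[OF p'(1)] \<open>0 < h a p'\<close> by simp
        qed
      qed
    qed (rule d)
  qed
  show ?thesis unfolding continuous_on_iff
  proof (intro ballI allI impI)
    fix p e assume p: "p \<in> P" and e: "(e::real) > 0"
    obtain d1 where d1: "d1 > 0" "\<forall>p'\<in>P. dist p' p < d1 \<longrightarrow> r p - e/2 < r p'"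
      using lower[OF p, of "r p - e/2"] e by auto
    obtain d2 where d2: "d2 > 0" "\<forall>p'\<in>P. dist p' p < d2 \<longrightarrow> r p' < r p + e/2"
      using upper[OF p, of "r p + e/2"] e by auto
    show "\<exists>d>0. \<forall>p'\<in>P. dist p' p < d \<longrightarrow> dist (r p') (r p) < e"
      using d1 d2 e by (intro exI[of _ "min d1 d2"]) (auto simp: dist_real_def abs_less_iff)
  qed
qed


definition Hf :: "real \<Rightarrow> real \<Rightarrow> real \<Rightarrow> real" where "Hf \<mu> u a = (u - \<mu>) / (u - a)"
definition Ro :: "real \<Rightarrow> real \<Rightarrow> real \<Rightarrow> nat \<Rightarrow> real \<Rightarrow> real" where
  "Ro l \<mu> u m b = Sup ((\<lambda>a. (b - a) * Hf \<mu> u a ^ m) ` {l..min b \<mu>})"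
definition F1 :: "real \<Rightarrow> real \<Rightarrow> nat \<Rightarrow> real \<Rightarrow> real \<Rightarrow> real" where
  "F1 l \<mu> m v b = (v - b) * (1 - ((max b \<mu> - \<mu>) / (max b \<mu> - l)) ^ m)"
definition F2 :: "real \<Rightarrow> real \<Rightarrow> nat \<Rightarrow> real \<Rightarrow> real \<Rightarrow> real" where
  "F2 \<mu> u m v b = Sup ((\<lambda>x. (v - x) * Hf \<mu> u x ^ m) ` {min b \<mu>..\<mu>})"
definition Ru :: "real \<Rightarrow> real \<Rightarrow> real \<Rightarrow> nat \<Rightarrow> real \<Rightarrow> real \<Rightarrow> real" where
  "Ru l \<mu> u m v b = min (F1 l \<mu> m v b) (F2 \<mu> u m v b)"

locale par =
  fixes l \<mu> u :: real and m :: nat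
  assumes lmu: "l < \<mu>" and muu: "\<mu> < u" and m0: "0 < m"
begin

lemma Hf_pos: "a < u \<Longrightarrow> 0 < Hf \<mu> u a" unfolding Hf_def using muu by simp
lemma Hf_nonneg: "a < u \<Longrightarrow> 0 \<le> Hf \<mu> u a" using Hf_pos by fastforce
lemma Hf_le1: "a \<le> \<mu> \<Longrightarrow> Hf \<mu> u a \<le> 1" unfolding Hf_def using muu by simp
lemma Hf_mu: "Hf \<mu> u \<mu> = 1" unfolding Hf_def using muu by simp
lemma Hf_mono: "a1 \<le> a2 \<Longrightarrow> a2 < u \<Longrightarrow> Hf \<mu> u a1 \<le> Hf \<mu> u a2"
  unfolding Hf_def using muu by (intro divide_left_mono) auto

lemma Hf_cont: "continuous_on {..\<mu>} (Hf \<mu> u)"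
  unfolding Hf_def using muu by (intro continuous_intros) auto

lemma termRo_cont: "continuous_on {l..min b \<mu>} (\<lambda>a. (b - a) * Hf \<mu> u a ^ m)"
  by (intro continuous_intros continuous_on_subset[OF Hf_cont]) auto

lemma termF2_cont: "continuous_on {min b \<mu>..\<mu>} (\<lambda>x. (v - x) * Hf \<mu> u x ^ m)"
  by (intro continuous_intros continuous_on_subset[OF Hf_cont]) auto

lemma Ro_ge: "l \<le> a \<Longrightarrow> a \<le> b \<Longrightarrow> a \<le> \<mu> \<Longrightarrow> (b - a) * Hf \<mu> u a ^ m \<le> Ro l \<mu> u m b"
  unfolding Ro_def by (rule sup_int_ge[OF _ _ termRo_cont]) auto

lemma Ro_le: "l \<le> b \<Longrightarrow> (\<And>a. l \<le> a \<Longrightarrow> a \<le> b \<Longrightarrow> a \<le> \<mu> \<Longrightarrow> (b - a) * Hf \<mu> u a ^ m \<le> R) \<Longrightarrow> Ro l \<mu> u m b \<le> R"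
  unfolding Ro_def using lmu by (intro sup_int_le) auto

lemma Ro_nonneg: "l \<le> b \<Longrightarrow> 0 \<le> Ro l \<mu> u m b"
proof -
  assume b: "l \<le> b"
  have "(b - min b \<mu>) * Hf \<mu> u (min b \<mu>) ^ m \<le> Ro l \<mu> u m b"
    by (rule Ro_ge) (use b lmu in auto)
  moreover have "0 \<le> (b - min b \<mu>) * Hf \<mu> u (min b \<mu>) ^ m"
    using Hf_nonneg[of "min b \<mu>"] muu by auto
  ultimately show ?thesis by linarith
qed

lemma Ro_lin: "l \<le> b \<Longrightarrow> Ro l \<mu> u m b \<le> b - l"
proof (rule Ro_le)
  fix a assume a: "l \<le> a" "a \<le> b" "a \<le> \<mu>"
  have "Hf \<mu> u a ^ m \<le> 1" using Hf_le1[OF a(3)] Hf_nonneg[of a] a muu by (simp add: power_le_one)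
  then have "(b - a) * Hf \<mu> u a ^ m \<le> (b - a) * 1" using a by (intro mult_left_mono) auto
  then show "(b - a) * Hf \<mu> u a ^ m \<le> b - l" using a by simp
qed

lemma Ro_l: "Ro l \<mu> u m l = 0"
  using Ro_lin[of l] Ro_nonneg[of l] by simp

lemma Ro_strict:
  assumes "l \<le> b1" "b1 < b2"
  shows "Ro l \<mu> u m b1 + (b2 - b1) * Hf \<mu> u l ^ m \<le> Ro l \<mu> u m b2"
proof -
  have "Ro l \<mu> u m b1 \<le> Ro l \<mu> u m b2 - (b2 - b1) * Hf \<mu> u l ^ m"
  proof (rule Ro_le)
    show "l \<le> b1" by fact
    fix a assume a: "l \<le> a" "a \<le> b1" "a \<le> \<mu>"
    have "Hf \<mu> u l ^ m \<le> Hf \<mu> u a ^ m"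
      using Hf_mono[of l a] Hf_nonneg[of l] a muu lmu by (intro power_mono) auto
    then have "(b2 - b1) * Hf \<mu> u l ^ m \<le> (b2 - b1) * Hf \<mu> u a ^ m"
      using assms by (intro mult_left_mono) auto
    moreover have "(b2 - a) * Hf \<mu> u a ^ m \<le> Ro l \<mu> u m b2"
      by (rule Ro_ge) (use a assms in auto)
    ultimately show "(b1 - a) * Hf \<mu> u a ^ m \<le> Ro l \<mu> u m b2 - (b2 - b1) * Hf \<mu> u l ^ m"
      by (simp add: algebra_simps)
  qed
  then show ?thesis by simp
qed

lemma Hfl_pos: "0 < Hf \<mu> u l ^ m" using Hf_pos[of l] lmu muu by simp

lemma Ro_strict': "l \<le> b1 \<Longrightarrow> b1 < b2 \<Longrightarrow> Ro l \<mu> u m b1 < Ro l \<mu> u m b2"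
  using Ro_strict[of b1 b2] Hfl_pos by (smt (verit) mult_pos_pos)

lemma Ro_u: "Ro l \<mu> u m u = u - \<mu>"
proof (rule antisym)
  show "Ro l \<mu> u m u \<le> u - \<mu>"
  proof (rule Ro_le)
    show "l \<le> u" using lmu muu by simp
    fix a assume a: "l \<le> a" "a \<le> u" "a \<le> \<mu>"
    have h0: "0 \<le> Hf \<mu> u a" "Hf \<mu> u a \<le> 1" using Hf_nonneg[of a] Hf_le1[of a] a muu by auto
    have "Hf \<mu> u a ^ m \<le> Hf \<mu> u a ^ 1" using h0 m0 by (intro power_decreasing) auto
    then have "(u - a) * Hf \<mu> u a ^ m \<le> (u - a) * Hf \<mu> u a" using a by (intro mult_left_mono) auto
    also have "\<dots> = u - \<mu>" unfolding Hf_def using a muu by simp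
    finally show "(u - a) * Hf \<mu> u a ^ m \<le> u - \<mu>" .
  qed
  show "u - \<mu> \<le> Ro l \<mu> u m u"
    using Ro_ge[of \<mu> u] lmu muu Hf_mu by simp
qed

lemma F2_ge: "min b \<mu> \<le> x \<Longrightarrow> x \<le> \<mu> \<Longrightarrow> (v - x) * Hf \<mu> u x ^ m \<le> F2 \<mu> u m v b"
  unfolding F2_def by (rule sup_int_ge[OF _ _ termF2_cont]) auto

lemma F2_le: "(\<And>x. min b \<mu> \<le> x \<Longrightarrow> x \<le> \<mu> \<Longrightarrow> (v - x) * Hf \<mu> u x ^ m \<le> R) \<Longrightarrow> F2 \<mu> u m v b \<le> R"
  unfolding F2_def by (intro sup_int_le) auto

lemma F2_mu: "\<mu> \<le> b \<Longrightarrow> F2 \<mu> u m v b = v - \<mu>"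
proof -
  assume b: "\<mu> \<le> b"
  have "F2 \<mu> u m v b \<le> v - \<mu>" by (rule F2_le) (use b Hf_mu in auto)
  moreover have "v - \<mu> \<le> F2 \<mu> u m v b" using F2_ge[of b \<mu> v] b Hf_mu by simp
  ultimately show ?thesis by simp
qed

lemma y_range: "\<mu> \<le> s \<Longrightarrow> 0 \<le> (s - \<mu>) / (s - l) \<and> (s - \<mu>) / (s - l) < 1"
  using lmu by (auto simp: divide_simps)

lemma y_mono: "\<mu> \<le> s1 \<Longrightarrow> s1 \<le> s2 \<Longrightarrow> (s1 - \<mu>) / (s1 - l) \<le> (s2 - \<mu>) / (s2 - l)"
proof -
  assume s: "\<mu> \<le> s1" "s1 \<le> s2"
  have "(s1 - \<mu>) * (s2 - l) \<le> (s2 - \<mu>) * (s1 - l)"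
  proof -
    have "(s2 - \<mu>) * (s1 - l) - (s1 - \<mu>) * (s2 - l) = (s2 - s1) * (\<mu> - l)" by (simp add: algebra_simps)
    moreover have "0 \<le> (s2 - s1) * (\<mu> - l)" using s lmu by simp
    ultimately show ?thesis by linarith
  qed
  then show ?thesis using s lmu by (simp add: divide_simps)
qed

lemma ym_range: "\<mu> \<le> s \<Longrightarrow> 0 \<le> ((s - \<mu>) / (s - l)) ^ m \<and> ((s - \<mu>) / (s - l)) ^ m < 1"
  using y_range[of s] m0 by (auto simp: power_less_one_iff)

lemma F1_low: "b \<le> \<mu> \<Longrightarrow> F1 l \<mu> m v b = v - b"
  unfolding F1_def using m0 by (simp add: max_def)

lemma F1_high: "\<mu> \<le> b \<Longrightarrow> F1 l \<mu> m v b = (v - b) * (1 - ((b - \<mu>) / (b - l)) ^ m)"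
  unfolding F1_def by (simp add: max_def)

lemma Ru_eq1: assumes "\<mu> \<le> b" "b \<le> v"
  shows "Ru l \<mu> u m v b = (v - b) * (1 - ((b - \<mu>) / (b - l)) ^ m)"
proof -
  have "(v - b) * (1 - ((b - \<mu>) / (b - l)) ^ m) \<le> (v - b) * 1"
    using ym_range[of b] assms by (intro mult_left_mono) auto
  then have "F1 l \<mu> m v b \<le> F2 \<mu> u m v b" using assms F1_high F2_mu by simp
  then show ?thesis unfolding Ru_def using F1_high assms by simp
qed

lemma Ru_eq2: assumes "b \<le> \<mu>" "b \<le> v"
  shows "Ru l \<mu> u m v b = F2 \<mu> u m v b"
proof -
  have "F2 \<mu> u m v b \<le> v - b"
  proof (rule F2_le)
    fix x assume x: "min b \<mu> \<le> x" "x \<le> \<mu>"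
    have h: "0 \<le> Hf \<mu> u x ^ m" "Hf \<mu> u x ^ m \<le> 1"
      using Hf_nonneg[of x] Hf_le1[of x] x muu by (auto simp: power_le_one)
    show "(v - x) * Hf \<mu> u x ^ m \<le> v - b"
    proof (cases "v - x \<ge> 0")
      case True
      then have "(v - x) * Hf \<mu> u x ^ m \<le> (v - x) * 1" using h by (intro mult_left_mono) auto
      then show ?thesis using x assms by simp
    next
      case False
      then have "(v - x) * Hf \<mu> u x ^ m \<le> 0" using h by (simp add: mult_nonpos_nonneg)
      then show ?thesis using assms by simp
    qed
  qed
  then show ?thesis unfolding Ru_def using F1_low assms by simp
qed

lemma F2_anti: "b1 \<le> b2 \<Longrightarrow> F2 \<mu> u m v b2 \<le> F2 \<mu> u m v b1"
  by (rule F2_le, rule F2_ge) auto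

lemma F1_anti: assumes "b1 \<le> b2" "b2 \<le> v" shows "F1 l \<mu> m v b2 \<le> F1 l \<mu> m v b1"
proof (cases "b2 \<le> \<mu>")
  case True then show ?thesis using assms F1_low by simp
next
  case False
  then have b2: "\<mu> \<le> b2" by simp
  have A: "F1 l \<mu> m v b2 \<le> v - b2"
    using F1_high[OF b2] ym_range[OF b2] assms by (simp add: mult_left_le)
  show ?thesis
  proof (cases "b1 \<le> \<mu>")
    case True then show ?thesis using A F1_low assms by simp
  next
    case False
    then have b1: "\<mu> \<le> b1" by simp
    have "((b1 - \<mu>) / (b1 - l)) ^ m \<le> ((b2 - \<mu>) / (b2 - l)) ^ m"
      using y_mono[OF b1 assms(1)] y_range[OF b1] by (intro power_mono) auto
    then have "(v - b2) * (1 - ((b2 - \<mu>) / (b2 - l)) ^ m) \<le> (v - b1) * (1 - ((b1 - \<mu>) / (b1 - l)) ^ m)"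
      using assms ym_range[OF b1] ym_range[OF b2] by (intro mult_mono) auto
    then show ?thesis using F1_high b1 b2 by simp
  qed
qed

lemma Ru_anti: "b1 \<le> b2 \<Longrightarrow> b2 \<le> v \<Longrightarrow> Ru l \<mu> u m v b2 \<le> Ru l \<mu> u m v b1"
  unfolding Ru_def using F1_anti F2_anti by (meson min.mono)

lemma F1_vstrict: "v1 < v2 \<Longrightarrow> F1 l \<mu> m v1 b < F1 l \<mu> m v2 b"
proof -
  assume v: "v1 < v2"
  have "\<mu> \<le> max b \<mu>" by simp
  from ym_range[OF this] have "0 < 1 - ((max b \<mu> - \<mu>) / (max b \<mu> - l)) ^ m" by simp
  then show ?thesis unfolding F1_def using v by (intro mult_strict_right_mono) auto
qed

lemma F2_vstrict: assumes "v1 < v2" "l \<le> b" shows "F2 \<mu> u m v1 b < F2 \<mu> u m v2 b"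
proof -
  have "F2 \<mu> u m v1 b \<le> F2 \<mu> u m v2 b - (v2 - v1) * Hf \<mu> u l ^ m"
  proof (rule F2_le)
    fix x assume x: "min b \<mu> \<le> x" "x \<le> \<mu>"
    have "Hf \<mu> u l ^ m \<le> Hf \<mu> u x ^ m"
      using Hf_mono[of l x] Hf_nonneg[of l] x muu lmu assms by (intro power_mono) auto
    then have "(v2 - v1) * Hf \<mu> u l ^ m \<le> (v2 - v1) * Hf \<mu> u x ^ m"
      using assms by (intro mult_left_mono) auto
    moreover have "(v2 - x) * Hf \<mu> u x ^ m \<le> F2 \<mu> u m v2 b" by (rule F2_ge) (use x in auto)
    ultimately show "(v1 - x) * Hf \<mu> u x ^ m \<le> F2 \<mu> u m v2 b - (v2 - v1) * Hf \<mu> u l ^ m"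
      by (simp add: algebra_simps)
  qed
  moreover have "0 < (v2 - v1) * Hf \<mu> u l ^ m" using assms Hfl_pos by simp
  ultimately show ?thesis by linarith
qed

lemma Ru_vstrict: "v1 < v2 \<Longrightarrow> l \<le> b \<Longrightarrow> Ru l \<mu> u m v1 b < Ru l \<mu> u m v2 b"
  unfolding Ru_def using F1_vstrict F2_vstrict by (smt (verit))

lemma Ru_vv: "Ru l \<mu> u m v v \<le> 0"
  unfolding Ru_def F1_def by simp

lemma Ru_l_nonneg: "l \<le> v \<Longrightarrow> 0 \<le> Ru l \<mu> u m v l"
proof -
  assume v: "l \<le> v"
  have "F1 l \<mu> m v l = v - l" using F1_low lmu by simp
  moreover have "(v - l) * Hf \<mu> u l ^ m \<le> F2 \<mu> u m v l" by (rule F2_ge) (use lmu in auto)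
  moreover have "0 \<le> (v - l) * Hf \<mu> u l ^ m" using v Hfl_pos by simp
  ultimately show ?thesis unfolding Ru_def using v by simp
qed

end


definition rootf :: "real \<Rightarrow> real \<Rightarrow> (real \<Rightarrow> real) \<Rightarrow> real" where
  "rootf x0 x1 h = (THE x. x0 \<le> x \<and> x \<le> x1 \<and> h x = 0)"

lemma root_unique:
  assumes strict: "\<And>x y. x0 \<le> x \<Longrightarrow> x < y \<Longrightarrow> y \<le> x1 \<Longrightarrow> h x < h y"
    and y: "x0 \<le> y" "y \<le> x1" "h y = 0"
  shows "rootf x0 x1 h = y"
  unfolding rootf_def
proof (rule the_equality)
  show "x0 \<le> y \<and> y \<le> x1 \<and> h y = 0" using y by simp
  fix x assume x: "x0 \<le> x \<and> x \<le> x1 \<and> h x = 0"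
  show "x = y"
  proof (rule ccontr)
    assume "x \<noteq> y"
    then have "x < y \<or> y < x" by auto
    then show False using strict[of x y] strict[of y x] x y by auto
  qed
qed

lemma root_prop:
  assumes "x0 \<le> x1" "continuous_on {x0..x1} h" "h x0 \<le> 0" "0 \<le> h x1"
    and strict: "\<And>x y. x0 \<le> x \<Longrightarrow> x < y \<Longrightarrow> y \<le> x1 \<Longrightarrow> h x < h y"
  shows "x0 \<le> rootf x0 x1 h \<and> rootf x0 x1 h \<le> x1 \<and> h (rootf x0 x1 h) = 0"
proof -
  obtain y where y: "x0 \<le> y" "y \<le> x1" "h y = 0" using IVT'[of h x0 0 x1] assms by auto
  have "rootf x0 x1 h = y" by (rule root_unique[where h=h]) (use strict y in auto)
  then show ?thesis using y by simp
qed

definition Gf :: "real \<Rightarrow> real \<Rightarrow> nat \<Rightarrow> real \<Rightarrow> real \<Rightarrow> real" where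
  "Gf l V m \<mu> u = u - \<mu> - F1 l \<mu> m V u"

definition Uf :: "real \<Rightarrow> real \<Rightarrow> nat \<Rightarrow> real \<Rightarrow> real" where
  "Uf l V m \<mu> = rootf l V (Gf l V m \<mu>)"

definition Df :: "real \<Rightarrow> real \<Rightarrow> real \<Rightarrow> nat \<Rightarrow> real \<Rightarrow> real \<Rightarrow> real" where
  "Df l \<mu> u m v b = Ro l \<mu> u m b - Ru l \<mu> u m v b"

definition cf :: "real \<Rightarrow> real \<Rightarrow> nat \<Rightarrow> real \<Rightarrow> real \<Rightarrow> real" where
  "cf l V m \<mu> v = rootf l v (Df l \<mu> (Uf l V m \<mu>) m v)"

lemma F1_cont: "l < \<mu> \<Longrightarrow> continuous_on S (\<lambda>b. F1 l \<mu> m v b)"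
  unfolding F1_def by (intro continuous_intros) auto

lemma Gf_props:
  assumes "l < \<mu>" "\<mu> < V" "0 < m"
  shows "continuous_on {l..V} (Gf l V m \<mu>)"
    and "\<And>x y. l \<le> x \<Longrightarrow> x < y \<Longrightarrow> y \<le> V \<Longrightarrow> Gf l V m \<mu> x < Gf l V m \<mu> y"
    and "Gf l V m \<mu> \<mu> < 0" and "0 < Gf l V m \<mu> V" and "Gf l V m \<mu> l \<le> 0"
proof -
  interpret par l \<mu> V m using assms by unfold_locales
  show "continuous_on {l..V} (Gf l V m \<mu>)" unfolding Gf_def
    using F1_cont[OF assms(1)] by (intro continuous_intros) auto
  show "\<And>x y. l \<le> x \<Longrightarrow> x < y \<Longrightarrow> y \<le> V \<Longrightarrow> Gf l V m \<mu> x < Gf l V m \<mu> y"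
    unfolding Gf_def using F1_anti by (smt (verit))
  show "Gf l V m \<mu> \<mu> < 0" unfolding Gf_def using F1_low[of \<mu> V] assms by simp
  show "0 < Gf l V m \<mu> V" unfolding Gf_def using F1_high[of V V] assms by simp
  show "Gf l V m \<mu> l \<le> 0" unfolding Gf_def using F1_low[of l V] assms by simp
qed

lemma Uf_props:
  assumes "l < \<mu>" "\<mu> < V" "0 < m"
  shows "\<mu> < Uf l V m \<mu>" "Uf l V m \<mu> < V" "Gf l V m \<mu> (Uf l V m \<mu>) = 0" "l \<le> Uf l V m \<mu>"
proof -
  note G = Gf_props[OF assms]
  have r: "l \<le> Uf l V m \<mu> \<and> Uf l V m \<mu> \<le> V \<and> Gf l V m \<mu> (Uf l V m \<mu>) = 0"
    unfolding Uf_def using assms G(4) by (intro root_prop G) auto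
  then show "Gf l V m \<mu> (Uf l V m \<mu>) = 0" "l \<le> Uf l V m \<mu>" by auto
  show "\<mu> < Uf l V m \<mu>"
  proof (rule ccontr)
    assume "\<not> \<mu> < Uf l V m \<mu>"
    then have "Gf l V m \<mu> (Uf l V m \<mu>) \<le> Gf l V m \<mu> \<mu>" using G(2)[of "Uf l V m \<mu>" \<mu>] r assms by force
    then show False using r G(3) by simp
  qed
  show "Uf l V m \<mu> < V"
  proof (rule ccontr)
    assume "\<not> Uf l V m \<mu> < V"
    then have "Uf l V m \<mu> = V" using r by simp
    then show False using r G(4) by simp
  qed
qed


lemma Ucomp_cont:
  assumes "continuous_on M U" "\<And>z. z \<in> S \<Longrightarrow> g z \<in> M" "continuous_on S g"
  shows "continuous_on S (\<lambda>z. U (g z))"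
  using continuous_on_compose2[OF assms(1) assms(3)] assms(2) by blast

lemma Ro_jcont:
  fixes U :: "real \<Rightarrow> real"
  assumes M: "compact M" and Uc: "continuous_on M U" and MU: "\<And>\<mu>. \<mu> \<in> M \<Longrightarrow> l < \<mu> \<and> \<mu> < U \<mu>"
  shows "continuous_on ({l..V} \<times> M) (\<lambda>p. Ro l (snd p) (U (snd p)) m (fst p))"
proof -
  let ?P = "{l..V} \<times> M"
  let ?f = "\<lambda>a p. (fst p - a) * Hf (snd p) (U (snd p)) a ^ m"
  let ?S = "{z. snd z \<in> ?P \<and> fst z \<in> {l..min (fst (snd z)) (snd (snd z))}}"
  have "continuous_on ?P (\<lambda>p. Sup ((\<lambda>x. ?f x p) ` {l..min (fst p) (snd p)}))"
  proof (rule cont_sup[where f="?f" and lo="\<lambda>p. l" and hi="\<lambda>p. min (fst p) (snd p)"])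
    show "compact ?P" using M by (simp add: compact_Times)
    show "continuous_on ?P (\<lambda>p. l)" by (rule continuous_intros)
    show "continuous_on ?P (\<lambda>p. min (fst p) (snd p))" by (intro continuous_intros)
    fix p assume "p \<in> ?P" then show "l \<le> min (fst p) (snd p)" using MU by (cases p) force
  next
    have Uc': "continuous_on ?S (\<lambda>z. U (snd (snd z)))"
      by (rule Ucomp_cont[OF Uc]) (auto intro!: continuous_intros)
    have nz: "\<And>z. z \<in> ?S \<Longrightarrow> U (snd (snd z)) - fst z \<noteq> 0"
      using MU by force
    show "continuous_on ?S (\<lambda>z. ?f (fst z) (snd z))"
      unfolding Hf_def using Uc' nz by (intro continuous_intros) auto
  qed
  then show ?thesis unfolding Ro_def by simp
qed

lemma Ru_jcont:
  fixes U :: "real \<Rightarrow> real"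
  assumes M: "compact M" and Uc: "continuous_on M U" and MU: "\<And>\<mu>. \<mu> \<in> M \<Longrightarrow> l < \<mu> \<and> \<mu> < U \<mu>"
  shows "continuous_on ({l..V} \<times> M) (\<lambda>p. Ru l (snd p) (U (snd p)) m v (fst p))"
proof -
  let ?P = "{l..V} \<times> M"
  let ?f = "\<lambda>x p. (v - x) * Hf (snd p) (U (snd p)) x ^ m"
  let ?S = "{z. snd z \<in> ?P \<and> fst z \<in> {min (fst (snd z)) (snd (snd z))..snd (snd z)}}"
  have "continuous_on ?P (\<lambda>p. Sup ((\<lambda>x. ?f x p) ` {min (fst p) (snd p)..snd p}))"
  proof (rule cont_sup[where f="?f" and lo="\<lambda>p. min (fst p) (snd p)" and hi="\<lambda>p. snd p"])
    show "compact ?P" using M by (simp add: compact_Times)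
    show "continuous_on ?P (\<lambda>p. min (fst p) (snd p))" by (intro continuous_intros)
    show "continuous_on ?P (\<lambda>p. snd p)" by (intro continuous_intros)
    fix p assume "p \<in> ?P" then show "min (fst p) (snd p) \<le> snd p" by simp
  next
    have Uc': "continuous_on ?S (\<lambda>z. U (snd (snd z)))"
      by (rule Ucomp_cont[OF Uc]) (auto intro!: continuous_intros)
    have nz: "\<And>z. z \<in> ?S \<Longrightarrow> U (snd (snd z)) - fst z \<noteq> 0"
      using MU by force
    show "continuous_on ?S (\<lambda>z. ?f (fst z) (snd z))"
      unfolding Hf_def using Uc' nz by (intro continuous_intros) auto
  qed
  then have c2: "continuous_on ?P (\<lambda>p. F2 (snd p) (U (snd p)) m v (fst p))" unfolding F2_def by simp
  have c1: "continuous_on ?P (\<lambda>p. F1 l (snd p) m v (fst p))"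
  proof -
    have nz: "\<And>p. p \<in> ?P \<Longrightarrow> max (fst p) (snd p) - l \<noteq> 0" using MU by force
    show ?thesis unfolding F1_def using nz by (intro continuous_intros) auto
  qed
  show ?thesis unfolding Ru_def by (intro continuous_intros c1 c2)
qed


lemma Uf_cont:
  assumes "l < \<mu>1" "\<mu>2 < V" "0 < m"
  shows "continuous_on {\<mu>1..\<mu>2} (Uf l V m)"
  unfolding Uf_def
proof (rule cont_root[where h="\<lambda>u \<mu>. Gf l V m \<mu> u" and xa=l and xb=V])
  have nz: "\<And>p. p \<in> {l..V} \<times> {\<mu>1..\<mu>2} \<Longrightarrow> max (fst p) (snd p) - l \<noteq> 0" using assms by force
  show "continuous_on ({l..V} \<times> {\<mu>1..\<mu>2}) (\<lambda>z. Gf l V m (snd z) (fst z))"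
    unfolding Gf_def F1_def using nz by (intro continuous_intros) auto
next
  fix p x y assume "p \<in> {\<mu>1..\<mu>2}" "l \<le> x" "x < y" "y \<le> V"
  then show "Gf l V m p x < Gf l V m p y" using Gf_props(2)[of l p V m x y] assms by auto
next
  fix p assume "p \<in> {\<mu>1..\<mu>2}"
  then show "l \<le> rootf l V (Gf l V m p) \<and> rootf l V (Gf l V m p) \<le> V \<and> Gf l V m p (rootf l V (Gf l V m p)) = 0"
    using Uf_props[of l p V m] assms unfolding Uf_def by force
qed

locale eqp =
  fixes l V :: real and m :: nat and \<mu> :: real
  assumes lmu: "l < \<mu>" and muV: "\<mu> < V" and m0: "0 < m"
begin

abbreviation "u \<equiv> Uf l V m \<mu>"

lemma u_props: "\<mu> < u" "u < V" "Gf l V m \<mu> u = 0"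
  using Uf_props[OF lmu muV m0] by auto

sublocale par l \<mu> u m using lmu u_props m0 by unfold_locales auto

lemma Df_cont: "continuous_on {l..V} (Df l \<mu> u m v)"
proof -
  have c1: "continuous_on ({l..V} \<times> {\<mu>}) (\<lambda>p. Ro l (snd p) ((\<lambda>_. u) (snd p)) m (fst p))"
    by (rule Ro_jcont) (use lmu u_props in auto)
  have c2: "continuous_on ({l..V} \<times> {\<mu>}) (\<lambda>p. Ru l (snd p) ((\<lambda>_. u) (snd p)) m v (fst p))"
    by (rule Ru_jcont) (use lmu u_props in auto)
  have c3: "continuous_on ({l..V} \<times> {\<mu>}) (\<lambda>p. Ro l (snd p) u m (fst p) - Ru l (snd p) u m v (fst p))"
    using c1 c2 by (intro continuous_intros) simp_all
  have "continuous_on {l..V} (\<lambda>b. Ro l (snd (b, \<mu>)) u m (fst (b, \<mu>)) - Ru l (snd (b, \<mu>)) u m v (fst (b, \<mu>)))"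
    by (rule continuous_on_compose2[OF c3]) (auto intro!: continuous_intros)
  then show ?thesis unfolding Df_def o_def by simp
qed

lemma Df_strict: "l \<le> x \<Longrightarrow> x < y \<Longrightarrow> y \<le> v \<Longrightarrow> Df l \<mu> u m v x < Df l \<mu> u m v y"
  unfolding Df_def using Ro_strict'[of x y] Ru_anti[of x y v] by simp

lemma cf_prop: assumes "l \<le> v" "v \<le> V"
  shows "l \<le> cf l V m \<mu> v \<and> cf l V m \<mu> v \<le> v \<and> Df l \<mu> u m v (cf l V m \<mu> v) = 0"
  unfolding cf_def
proof (rule root_prop)
  show "l \<le> v" by fact
  show "continuous_on {l..v} (Df l \<mu> u m v)" by (rule continuous_on_subset[OF Df_cont[of v]]) (use assms in auto)
  show "Df l \<mu> u m v l \<le> 0" unfolding Df_def using Ro_l Ru_l_nonneg[OF assms(1)] by simp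
  show "0 \<le> Df l \<mu> u m v v" unfolding Df_def using Ro_nonneg[OF assms(1)] Ru_vv[of v] by simp
qed (rule Df_strict)

lemma cf_eq: "l \<le> v \<Longrightarrow> v \<le> V \<Longrightarrow> Ro l \<mu> u m (cf l V m \<mu> v) = Ru l \<mu> u m v (cf l V m \<mu> v)"
  using cf_prop unfolding Df_def by force

lemma cf_mono: assumes "l \<le> v1" "v1 < v2" "v2 \<le> V" shows "cf l V m \<mu> v1 < cf l V m \<mu> v2"
proof (rule ccontr)
  let ?c1 = "cf l V m \<mu> v1" and ?c2 = "cf l V m \<mu> v2"
  assume "\<not> ?c1 < ?c2"
  then have le: "?c2 \<le> ?c1" by simp
  have p1: "l \<le> ?c1" "?c1 \<le> v1" "Df l \<mu> u m v1 ?c1 = 0" using cf_prop[of v1] assms by auto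
  have p2: "l \<le> ?c2" "?c2 \<le> v2" "Df l \<mu> u m v2 ?c2 = 0" using cf_prop[of v2] assms by auto
  have "Df l \<mu> u m v2 ?c1 < Df l \<mu> u m v1 ?c1"
    unfolding Df_def using Ru_vstrict[OF assms(2) p1(1)] by simp
  then have neg: "Df l \<mu> u m v2 ?c1 < 0" using p1 by simp
  have "Df l \<mu> u m v2 ?c2 \<le> Df l \<mu> u m v2 ?c1"
    using le Df_strict[of ?c2 ?c1 v2] p1 p2 assms by (cases "?c2 = ?c1") auto
  then show False using neg p2 by simp
qed

lemma cf_l: "cf l V m \<mu> l = l" using cf_prop[of l] lmu muV by auto

lemma cf_V: "cf l V m \<mu> V = u"
proof -
  have "rootf l V (Df l \<mu> u m V) = u"
  proof (rule root_unique)
    show "\<And>x y. l \<le> x \<Longrightarrow> x < y \<Longrightarrow> y \<le> V \<Longrightarrow> Df l \<mu> u m V x < Df l \<mu> u m V y" by (rule Df_strict)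
    show "l \<le> u" "u \<le> V" using u_props lmu by auto
    have "Ru l \<mu> u m V u = (V - u) * (1 - ((u - \<mu>) / (u - l)) ^ m)"
      using Ru_eq1[of u V] u_props by simp
    moreover have "F1 l \<mu> m V u = (V - u) * (1 - ((u - \<mu>) / (u - l)) ^ m)"
      using F1_high[of u V] u_props by simp
    ultimately show "Df l \<mu> u m V u = 0" unfolding Df_def using Ro_u u_props(3) unfolding Gf_def by simp
  qed
  then show ?thesis unfolding cf_def .
qed

lemma cf_lower:
  assumes "l \<le> v" "v \<le> V" "\<mu> - l < v - \<mu>"
  shows "\<mu> < cf l V m \<mu> v \<and> (v - cf l V m \<mu> v) * (\<mu> - l) \<le> (cf l V m \<mu> v - l)^2"
proof -
  let ?c = "cf l V m \<mu> v"
  have p: "l \<le> ?c" "?c \<le> v" using cf_prop assms by auto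
  have eq: "Ro l \<mu> u m ?c = Ru l \<mu> u m v ?c" using cf_eq assms by simp
  have lin: "Ro l \<mu> u m ?c \<le> ?c - l" using Ro_lin p by simp
  have gt: "\<mu> < ?c"
  proof (rule ccontr)
    assume "\<not> \<mu> < ?c"
    then have cm: "?c \<le> \<mu>" by simp
    have "(v - \<mu>) * Hf \<mu> u \<mu> ^ m \<le> F2 \<mu> u m v ?c" by (rule F2_ge) (use cm in auto)
    then have "v - \<mu> \<le> Ru l \<mu> u m v ?c" using Ru_eq2[OF cm p(2)] Hf_mu by simp
    then show False using eq lin cm assms by simp
  qed
  have y: "0 \<le> (?c - \<mu>) / (?c - l)" "(?c - \<mu>) / (?c - l) < 1" using y_range[of ?c] gt by auto
  have "((?c - \<mu>) / (?c - l)) ^ m \<le> ((?c - \<mu>) / (?c - l)) ^ 1"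
    using y m0 by (intro power_decreasing) auto
  then have "(\<mu> - l) / (?c - l) \<le> 1 - ((?c - \<mu>) / (?c - l)) ^ m"
    using gt lmu by (simp add: field_simps)
  then have "(v - ?c) * ((\<mu> - l) / (?c - l)) \<le> (v - ?c) * (1 - ((?c - \<mu>) / (?c - l)) ^ m)"
    using p by (intro mult_left_mono) auto
  also have "\<dots> = Ru l \<mu> u m v ?c" using Ru_eq1[of ?c v] gt p by simp
  also have "\<dots> \<le> ?c - l" using eq lin by simp
  finally have "(v - ?c) * ((\<mu> - l) / (?c - l)) \<le> ?c - l" .
  then have "(v - ?c) * (\<mu> - l) \<le> (?c - l) * (?c - l)" using gt lmu by (simp add: field_simps)
  then show ?thesis using gt by (simp add: power2_eq_square)
qed

end

lemma cf_cont:
  assumes "l < \<mu>1" "\<mu>1 \<le> \<mu>2" "\<mu>2 < V" "0 < m" "l \<le> v" "v \<le> V"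
  shows "continuous_on {\<mu>1..\<mu>2} (\<lambda>\<mu>. cf l V m \<mu> v)"
  unfolding cf_def
proof (rule cont_root[where h="\<lambda>b \<mu>. Df l \<mu> (Uf l V m \<mu>) m v b" and xa=l and xb=v])
  have Uc: "continuous_on {\<mu>1..\<mu>2} (Uf l V m)" by (rule Uf_cont) (use assms in auto)
  have MU: "\<And>\<mu>. \<mu> \<in> {\<mu>1..\<mu>2} \<Longrightarrow> l < \<mu> \<and> \<mu> < Uf l V m \<mu>"
    using Uf_props assms by force
  have c1: "continuous_on ({l..V} \<times> {\<mu>1..\<mu>2}) (\<lambda>p. Ro l (snd p) (Uf l V m (snd p)) m (fst p))"
    by (rule Ro_jcont[OF _ Uc MU]) auto
  have c2: "continuous_on ({l..V} \<times> {\<mu>1..\<mu>2}) (\<lambda>p. Ru l (snd p) (Uf l V m (snd p)) m v (fst p))"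
    by (rule Ru_jcont[OF _ Uc MU]) auto
  have "continuous_on ({l..V} \<times> {\<mu>1..\<mu>2}) (\<lambda>z. Df l (snd z) (Uf l V m (snd z)) m v (fst z))"
    unfolding Df_def using c1 c2 by (intro continuous_intros)
  then show "continuous_on ({l..v} \<times> {\<mu>1..\<mu>2}) (\<lambda>z. Df l (snd z) (Uf l V m (snd z)) m v (fst z))"
    by (rule continuous_on_subset) (use assms in auto)
next
  fix p x y assume "p \<in> {\<mu>1..\<mu>2}" "l \<le> x" "x < y" "y \<le> v"
  then show "Df l p (Uf l V m p) m v x < Df l p (Uf l V m p) m v y"
    using eqp.Df_strict[of l V m p x y v] assms by (auto simp: eqp_def)
next
  fix p assume "p \<in> {\<mu>1..\<mu>2}"
  then show "l \<le> rootf l v (Df l p (Uf l V m p) m v) \<and> rootf l v (Df l p (Uf l V m p) m v) \<le> v \<and>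
      Df l p (Uf l V m p) m v (rootf l v (Df l p (Uf l V m p) m v)) = 0"
    using eqp.cf_prop[of l V m p v] assms unfolding cf_def by (auto simp: eqp_def)
qed


lemma ereal_Sup_le:
  fixes f :: "real \<Rightarrow> real"
  assumes "lo \<le> hi" "continuous_on {lo..hi} f" "\<And>x. lo \<le> x \<Longrightarrow> x \<le> hi \<Longrightarrow> ereal (f x) \<le> X"
  shows "ereal (Sup (f ` {lo..hi})) \<le> X"
proof (cases X)
  case (real r)
  have "Sup (f ` {lo..hi}) \<le> r" by (rule sup_int_le) (use assms real in auto)
  then show ?thesis using real by simp
next
  case PInf then show ?thesis by simp
next
  case MInf then show ?thesis using assms(3)[of lo] assms(1) by simp
qed

lemma ereal_le_trans2: "(y::real) \<le> x \<Longrightarrow> ereal x \<le> X \<Longrightarrow> ereal y \<le> X"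
  using order_trans[of "ereal y" "ereal x" X] by simp

context eqp begin

lemma MLoss_nonneg:
  assumes J: "finite J" "card J = m" and l0: "0 \<le> l" and b: "0 \<le> b"
  shows "0 \<le> max_loss J l \<mu> u v b"
proof -
  have Bin: "(\<lambda>_. TP \<mu> \<mu> 1) \<in> belief_set J l \<mu> u"
    by (rule TP_in_set) (use l0 lmu u_props in auto)
  have "ereal (exp_payoff J (\<lambda>_. TP \<mu> \<mu> 1) v b - exp_payoff J (\<lambda>_. TP \<mu> \<mu> 1) v b) \<le> loss J (\<lambda>_. TP \<mu> \<mu> 1) v b"
    by (rule loss_ge[OF b])
  also have "\<dots> \<le> max_loss J l \<mu> u v b" by (rule max_loss_ge[OF Bin])
  finally show ?thesis by (simp add: zero_ereal_def)
qed

lemma MLoss_ge_Ro: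
  assumes J: "finite J" "card J = m" and l0: "0 \<le> l" and b: "l < b"
  shows "ereal (Ro l \<mu> u m b) \<le> max_loss J l \<mu> u v b"
proof -
  let ?MX = "max_loss J l \<mu> u v b"
  have limit: "ereal ((b - a) * Hf \<mu> u a ^ m) \<le> ?MX" if a: "l \<le> a" "a \<le> \<mu>" "a < b" "b < u \<or> a = \<mu>" for a
  proof (rule ereal_limit_right[where g="\<lambda>b'. (b - b') * Hf \<mu> u a ^ m" and tb=b])
    show "a < b" by fact
    show "continuous_on {a..b} (\<lambda>b'. (b - b') * Hf \<mu> u a ^ m)" by (intro continuous_intros)
    fix t assume "a < t" "t < b"
    then show "ereal ((b - t) * Hf \<mu> u a ^ m) \<le> ?MX"
      using LB1[OF J l0 a(1) a(2) u_props(1), of t b v] a unfolding Hf_def by simp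
  qed
  show ?thesis unfolding Ro_def
  proof (rule ereal_Sup_le)
    show "l \<le> min b \<mu>" using b lmu by simp
    show "continuous_on {l..min b \<mu>} (\<lambda>a. (b - a) * Hf \<mu> u a ^ m)" by (rule termRo_cont)
    fix a assume a: "l \<le> a" "a \<le> min b \<mu>"
    show "ereal ((b - a) * Hf \<mu> u a ^ m) \<le> ?MX"
    proof (cases "a = b")
      case True
      then show ?thesis using MLoss_nonneg[OF J l0, of b v] b l0 by (simp add: zero_ereal_def)
    next
      case False
      then have ab: "a < b" using a by simp
      show ?thesis
      proof (cases "b < u \<or> a = \<mu>")
        case True then show ?thesis using limit[of a] a ab by simp
      next
        case False
        then have bu: "u \<le> b" "a < \<mu>" using a by auto
        have h: "0 \<le> Hf \<mu> u a" "Hf \<mu> u a \<le> 1" using Hf_nonneg[of a] Hf_le1[of a] a u_props by auto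
        have "(b - a) * Hf \<mu> u a ^ m = (u - a) * Hf \<mu> u a ^ m + (b - u) * Hf \<mu> u a ^ m"
          by (simp add: algebra_simps)
        also have "(u - a) * Hf \<mu> u a ^ m \<le> (u - a) * Hf \<mu> u a ^ 1"
          using h m0 a u_props by (intro mult_left_mono power_decreasing) auto
        also have "(u - a) * Hf \<mu> u a ^ 1 = u - \<mu>" unfolding Hf_def using bu u_props by simp
        also have "(b - u) * Hf \<mu> u a ^ m \<le> (b - u) * 1"
          using h bu by (intro mult_left_mono) (auto simp: power_le_one)
        finally have "(b - a) * Hf \<mu> u a ^ m \<le> (b - \<mu>) * Hf \<mu> u \<mu> ^ m" using Hf_mu by simp
        moreover have "ereal ((b - \<mu>) * Hf \<mu> u \<mu> ^ m) \<le> ?MX"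
          using limit[of \<mu>] lmu bu u_props by simp
        ultimately show ?thesis by (rule ereal_le_trans2)
      qed
    qed
  qed
qed

lemma MLoss_ge_Ru:
  assumes J: "finite J" "card J = m" "J \<noteq> {}" and l0: "0 \<le> l" and b: "0 \<le> b" "b < u"
  shows "ereal (Ru l \<mu> u m v (max b l)) \<le> max_loss J l \<mu> u v b"
proof -
  let ?MX = "max_loss J l \<mu> u v b"
  show ?thesis
  proof (cases "\<mu> \<le> b")
    case True
    have step1: "ereal ((v - c) - (v - b) * ((c - \<mu>) / (c - l)) ^ m) \<le> ?MX" if c: "b < c" "c \<le> u" for c
    proof (rule ereal_limit_right[where g="\<lambda>b'. (v - b') - (v - b) * ((c - \<mu>) / (c - l)) ^ m" and ta=c and tb="c+1"])
      show "c < c + 1" by simp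
      show "continuous_on {c..c+1} (\<lambda>b'. (v - b') - (v - b) * ((c - \<mu>) / (c - l)) ^ m)"
        by (intro continuous_intros)
      fix t assume "c < t" "t < c + 1"
      then show "ereal ((v - t) - (v - b) * ((c - \<mu>) / (c - l)) ^ m) \<le> ?MX"
        using LB2[OF J(1,2) l0 lmu True c(1) c(2), of t v] by simp
    qed
    have A: "ereal ((v - b) - (v - b) * ((b - \<mu>) / (b - l)) ^ m) \<le> ?MX"
    proof (rule ereal_limit_right[where g="\<lambda>c. (v - c) - (v - b) * ((c - \<mu>) / (c - l)) ^ m" and tb=u])
      show "b < u" by fact
      show "continuous_on {b..u} (\<lambda>c. (v - c) - (v - b) * ((c - \<mu>) / (c - l)) ^ m)"
        using True lmu by (intro continuous_intros) auto
      fix t assume "b < t" "t < u" then show "ereal ((v - t) - (v - b) * ((t - \<mu>) / (t - l)) ^ m) \<le> ?MX"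
        using step1 by simp
    qed
    have "Ru l \<mu> u m v (max b l) \<le> F1 l \<mu> m v b" unfolding Ru_def using True lmu by simp
    moreover have "F1 l \<mu> m v b = (v - b) - (v - b) * ((b - \<mu>) / (b - l)) ^ m"
      using F1_high[OF True] by (simp add: algebra_simps)
    ultimately have B: "Ru l \<mu> u m v (max b l) \<le> (v - b) - (v - b) * ((b - \<mu>) / (b - l)) ^ m" by simp
    show ?thesis by (rule ereal_le_trans2[OF B A])
  next
    case False
    then have bm: "b < \<mu>" by simp
    define b0 where "b0 = max b l"
    have b0: "l \<le> b0" "b0 \<le> \<mu>" "b \<le> b0" using bm lmu unfolding b0_def by auto
    have step1: "ereal ((v - c) * Hf \<mu> u c ^ m) \<le> ?MX" if c: "b < c" "c \<le> \<mu>" "l \<le> c" for c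
    proof (rule ereal_limit_right[where g="\<lambda>b'. (v - b') * Hf \<mu> u c ^ m" and ta=c and tb=u])
      show "c < u" using c u_props by simp
      show "continuous_on {c..u} (\<lambda>b'. (v - b') * Hf \<mu> u c ^ m)" by (intro continuous_intros)
      fix t assume "c < t" "t < u"
      then show "ereal ((v - t) * Hf \<mu> u c ^ m) \<le> ?MX"
        using LB3[OF J l0 c(3) c(1) c(2) u_props(1), of t v] unfolding Hf_def by simp
    qed
    have A: "ereal (F2 \<mu> u m v b0) \<le> ?MX" unfolding F2_def
    proof (rule ereal_Sup_le)
      show "min b0 \<mu> \<le> \<mu>" by simp
      show "continuous_on {min b0 \<mu>..\<mu>} (\<lambda>x. (v - x) * Hf \<mu> u x ^ m)" by (rule termF2_cont)
      fix x assume x: "min b0 \<mu> \<le> x" "x \<le> \<mu>"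
      show "ereal ((v - x) * Hf \<mu> u x ^ m) \<le> ?MX"
      proof (cases "x = b")
        case True
        show ?thesis
        proof (rule ereal_limit_right[where g="\<lambda>x. (v - x) * Hf \<mu> u x ^ m" and ta=x and tb=\<mu>])
          show "x < \<mu>" using True bm by simp
          show "continuous_on {x..\<mu>} (\<lambda>x. (v - x) * Hf \<mu> u x ^ m)"
            using termF2_cont[of b v] True bm by (simp add: min_def)
          fix t assume "x < t" "t < \<mu>" then show "ereal ((v - t) * Hf \<mu> u t ^ m) \<le> ?MX"
            using step1[of t] True x b0 by simp
        qed
      next
        case False
        have "b0 \<le> x" using x b0 by (simp add: min_absorb1)
        then have "b < x" "l \<le> x" using False b0 by auto
        then show ?thesis using step1[of x] x by blast
      qed
    qed
    have B: "Ru l \<mu> u m v b0 \<le> F2 \<mu> u m v b0" unfolding Ru_def by simp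
    show ?thesis using ereal_le_trans2[OF B A] unfolding b0_def .
  qed
qed

lemma cf_le_u: "l \<le> v \<Longrightarrow> v \<le> V \<Longrightarrow> cf l V m \<mu> v \<le> u"
  using cf_mono[of v V] cf_V by (cases "v = V") auto

lemma cf_minimax:
  assumes J: "finite J" "card J = m" "J \<noteq> {}" and l0: "0 \<le> l" and v: "l \<le> v" "v \<le> V"
  shows "minimax_loss_bid J l \<mu> u v (cf l V m \<mu> v)"
proof -
  let ?c = "cf l V m \<mu> v"
  let ?R = "Ro l \<mu> u m ?c"
  have cp: "l \<le> ?c" "?c \<le> v" using cf_prop v by auto
  have eq: "?R = Ru l \<mu> u m v ?c" using cf_eq v by simp
  have cu: "?c \<le> u" using cf_le_u v by simp
  have up: "max_loss J l \<mu> u v ?c \<le> ereal ?R"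
    unfolding max_loss_def
  proof (rule SUP_least)
    fix B assume B: "B \<in> belief_set J l \<mu> u"
    show "loss J B v ?c \<le> ereal ?R"
    proof (rule loss_UB[OF J(1) J(3) J(2) l0 lmu u_props(1) cp B Ro_nonneg[OF cp(1)]])
      fix a assume "l \<le> a" "a \<le> ?c" "a \<le> \<mu>"
      then show "(?c - a) * ((u - \<mu>) / (u - a)) ^ m \<le> ?R" using Ro_ge[of a ?c] unfolding Hf_def by simp
    next
      assume "\<mu> \<le> ?c"
      then show "(v - ?c) * (1 - ((?c - \<mu>) / (?c - l)) ^ m) \<le> ?R" using Ru_eq1[of ?c v] cp eq by simp
    next
      fix x assume x: "?c < \<mu>" "?c \<le> x" "x \<le> \<mu>"
      have "(v - x) * Hf \<mu> u x ^ m \<le> F2 \<mu> u m v ?c" by (rule F2_ge) (use x in auto)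
      then show "(v - x) * ((u - \<mu>) / (u - x)) ^ m \<le> ?R"
        using Ru_eq2[of ?c v] x cp eq unfolding Hf_def by simp
    qed
  qed
  have low: "ereal ?R \<le> max_loss J l \<mu> u v b" if b: "0 \<le> b" for b
  proof (cases "b < ?c")
    case True
    have "ereal (Ru l \<mu> u m v (max b l)) \<le> max_loss J l \<mu> u v b"
      by (rule MLoss_ge_Ru[OF J l0 b]) (use True cu in auto)
    moreover have "Ru l \<mu> u m v ?c \<le> Ru l \<mu> u m v (max b l)"
      by (rule Ru_anti) (use True cp in auto)
    ultimately show ?thesis using eq ereal_le_trans2 by metis
  next
    case False
    show ?thesis
    proof (cases "l < b")
      case True
      have "ereal (Ro l \<mu> u m b) \<le> max_loss J l \<mu> u v b" by (rule MLoss_ge_Ro[OF J(1,2) l0 True])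
      moreover have "?R \<le> Ro l \<mu> u m b"
        using Ro_strict'[of ?c b] False cp by (cases "?c = b") auto
      ultimately show ?thesis using ereal_le_trans2 by metis
    next
      case False
      then have "?c = l" using cp \<open>\<not> b < ?c\<close> by simp
      then have "?R = 0" using Ro_l by simp
      then show ?thesis using MLoss_nonneg[OF J(1,2) l0 b, of v] by (simp add: zero_ereal_def)
    qed
  qed
  show ?thesis unfolding minimax_loss_bid_def
    using cp l0 up low by (meson order_trans)
qed

end


context
  fixes F :: "real measure"
  assumes PF: "prob_space F" and SF: "sets F = sets borel"
begin

lemma spF: "space F = UNIV" using SF sets_eq_imp_space_eq by fastforce

lemma F_em: "emeasure F A = ennreal (measure F A)"
proof -
  interpret prob_space F by (rule PF)
  show ?thesis by (rule emeasure_eq_measure)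
qed

lemma supp_AE: "AE x in F. x \<in> supp F"
proof -
  define I where "I = {pq :: rat \<times> rat. measure F {real_of_rat (fst pq) <..< real_of_rat (snd pq)} = 0}"
  define N where "N = (\<Union>pq\<in>I. {real_of_rat (fst pq) <..< real_of_rat (snd pq)})"
  have "N \<in> null_sets F" unfolding N_def
  proof (rule null_sets_UN')
    show "countable I" by (rule countable_subset[of _ UNIV]) auto
    fix pq assume "pq \<in> I"
    then have "measure F {real_of_rat (fst pq) <..< real_of_rat (snd pq)} = 0" unfolding I_def by auto
    then show "{real_of_rat (fst pq) <..< real_of_rat (snd pq)} \<in> null_sets F"
      using F_em SF by (auto simp: null_sets_def)
  qed
  moreover have "{x \<in> space F. \<not> x \<in> supp F} \<subseteq> N"
  proof clarify
    fix x assume "x \<notin> supp F"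
    then obtain e where e: "e > 0" "\<not> 0 < measure F {x - e <..< x + e}" unfolding supp_def by auto
    then have m0: "measure F {x - e <..< x + e} = 0" using measure_nonneg[of F] by (meson not_less order_antisym)
    obtain r1 where r1: "r1 \<in> \<rat>" "x - e < r1" "r1 < x" using Rats_dense_in_real[of "x - e" x] e by auto
    obtain r2 where r2: "r2 \<in> \<rat>" "x < r2" "r2 < x + e" using Rats_dense_in_real[of x "x + e"] e by auto
    obtain p where p: "r1 = real_of_rat p" using r1 Rats_cases by blast
    obtain q where q: "r2 = real_of_rat q" using r2 Rats_cases by blast
    have "measure F {r1 <..< r2} \<le> measure F {x - e <..< x + e}"
      using r1 r2 F_em SF by (intro measure_mono_fmeasurable) (auto simp: fmeasurable_def)
    then have "measure F {r1 <..< r2} = 0" using m0 measure_nonneg[of F "{r1<..<r2}"] by linarith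
    then have "(p, q) \<in> I" unfolding I_def using p q by simp
    then show "x \<in> N" unfolding N_def using r1 r2 p q by (auto intro!: bexI[of _ "(p, q)"])
  qed
  ultimately show ?thesis by (rule AE_I')
qed


lemma supp_closed: "closed (supp F)"
  unfolding closed_def open_dist
proof (intro ballI)
  fix x assume "x \<in> - supp F"
  then obtain e where e: "e > 0" "\<not> 0 < measure F {x - e <..< x + e}" unfolding supp_def by auto
  then have m0: "measure F {x - e <..< x + e} = 0" using measure_nonneg[of F "{x - e <..< x + e}"] by linarith
  show "\<exists>d>0. \<forall>y. dist y x < d \<longrightarrow> y \<in> - supp F"
  proof (intro exI[of _ "e/2"] conjI allI impI)
    show "e/2 > 0" using e by simp
    fix y assume "dist y x < e/2"
    then have "\<bar>y - x\<bar> < e/2" by (simp add: dist_real_def)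
    then have y: "x - e \<le> y - e/2" "y + e/2 \<le> x + e" by linarith+
    have "measure F {y - e/2 <..< y + e/2} \<le> measure F {x - e <..< x + e}"
      using y F_em SF by (intro measure_mono_fmeasurable) (auto simp: fmeasurable_def)
    then have "\<not> 0 < measure F {y - e/2 <..< y + e/2}" using m0 by simp
    then show "y \<in> - supp F" unfolding supp_def using e by (auto intro!: exI[of _ "e/2"])
  qed
qed

lemma supp_ne: "supp F \<noteq> {}"
proof
  assume "supp F = {}"
  then have "AE x in F. False" using supp_AE by simp
  then have "emeasure F (space F) = 0" by (simp add: AE_iff_null_sets null_setsD1)
  then show False using prob_space.emeasure_space_1[OF PF] by simp
qed

lemma supp_pos: "x \<in> supp F \<Longrightarrow> 0 < e \<Longrightarrow> 0 < measure F {x - e <..< x + e}"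
  unfolding supp_def by auto

end


lemma key_ineq:
  fixes p t e c lo v0 :: real
  assumes p: "0 < p" "p \<le> 1" and t: "0 < t" and e: "e = p^2 * t / 4" and v0: "v0 = lo + t"
    and c: "lo < c" and low: "(v0 - c) * e \<le> (c - lo)^2"
  shows "e < p * (c - lo)"
proof (cases "t/2 \<le> c - lo")
  case True
  have "p * (t/2) \<le> p * (c - lo)" using True p by (intro mult_left_mono) auto
  moreover have "p^2 * t / 4 < p * (t / 2)"
  proof -
    have "p^2 \<le> p" using p by (simp add: power2_eq_square mult_left_le)
    then have "p^2 * t \<le> p * t" using t by (intro mult_right_mono) auto
    then show ?thesis using p t by simp
  qed
  ultimately show ?thesis using e by linarith
next
  case False
  then have "t/2 \<le> v0 - c" using v0 by simp
  moreover have "0 \<le> e"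
  proof -
    have "0 \<le> p^2 * t" using t by simp
    then show ?thesis using e by simp
  qed
  ultimately have "(t/2) * e \<le> (v0 - c) * e" by (intro mult_right_mono) auto
  with low have A: "(t/2) * e \<le> (c - lo)^2" by simp
  show ?thesis
  proof (rule ccontr)
    assume "\<not> e < p * (c - lo)"
    then have "p * (c - lo) \<le> p^2 * t / 4" using e by simp
    then have "p * (c - lo) \<le> p * (p * t / 4)" by (simp add: power2_eq_square)
    then have "c - lo \<le> p * t / 4" by (rule mult_left_le_imp_le) (use p in simp)
    then have "(c - lo)^2 \<le> (p * t / 4)^2" using c by (intro power_mono) auto
    with A have "(t/2) * (p^2 * t / 4) \<le> (p * t / 4)^2" using e by simp
    then have "p^2 * t^2 / 8 \<le> p^2 * t^2 / 16" by (simp add: power2_eq_square field_simps)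
    moreover have "0 < p^2 * t^2" using p t by simp
    ultimately show False by simp
  qed
qed

locale gcase =
  fixes F :: "real measure" and l V :: real and m :: nat
  assumes PF: "prob_space F" and SF: "sets F = sets borel" and l0: "0 \<le> l" and lV: "l < V"
    and lS: "l \<in> supp F" and VS: "V \<in> supp F" and rng: "\<And>v. v \<in> supp F \<Longrightarrow> l \<le> v \<and> v \<le> V"
    and m0: "0 < m"
begin

definition cl :: "real \<Rightarrow> real" where "cl v = max l (min v V)"
definition bet :: "real \<Rightarrow> real \<Rightarrow> real" where "bet \<mu> v = cf l V m \<mu> (cl v)"

lemma cl_range: "l \<le> cl v \<and> cl v \<le> V" unfolding cl_def using lV by auto
lemma cl_mono: "mono cl" unfolding cl_def mono_def by auto
lemma cl_id: "l \<le> v \<Longrightarrow> v \<le> V \<Longrightarrow> cl v = v" unfolding cl_def by auto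

lemma eqpI: "l < \<mu> \<Longrightarrow> \<mu> < V \<Longrightarrow> eqp l V m \<mu>" using m0 by unfold_locales auto

lemma cf_mono': assumes "l < \<mu>" "\<mu> < V" "l \<le> v1" "v1 \<le> v2" "v2 \<le> V"
  shows "cf l V m \<mu> v1 \<le> cf l V m \<mu> v2"
  using eqp.cf_mono[OF eqpI[OF assms(1,2)], of v1 v2] assms by (cases "v1 = v2") auto

lemma bet_mono: "l < \<mu> \<Longrightarrow> \<mu> < V \<Longrightarrow> mono (bet \<mu>)"
  unfolding mono_def bet_def using cf_mono' cl_range cl_mono by (meson monoD)

lemma bet_range: "l < \<mu> \<Longrightarrow> \<mu> < V \<Longrightarrow> l \<le> bet \<mu> v \<and> bet \<mu> v \<le> cl v"
  unfolding bet_def using eqp.cf_prop[OF eqpI, of \<mu> "cl v"] cl_range by auto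

lemma bet_meas: "l < \<mu> \<Longrightarrow> \<mu> < V \<Longrightarrow> bet \<mu> \<in> borel_measurable F"
  using borel_measurable_mono[OF bet_mono] SF measurable_cong_sets by blast

lemma bet_meas_borel: "l < \<mu> \<Longrightarrow> \<mu> < V \<Longrightarrow> bet \<mu> \<in> borel_measurable borel"
  using borel_measurable_mono[OF bet_mono] by blast

lemma cl_meas: "cl \<in> borel_measurable F"
  using borel_measurable_mono[OF cl_mono] SF measurable_cong_sets by blast

lemma bet_int: "l < \<mu> \<Longrightarrow> \<mu> < V \<Longrightarrow> integrable F (bet \<mu>)"
proof -
  assume a: "l < \<mu>" "\<mu> < V"
  interpret prob_space F by (rule PF)
  show ?thesis
  proof (rule integrable_const_bound[where B=V])
    show "AE x in F. norm (bet \<mu> x) \<le> V"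
    proof (rule AE_I2)
      fix x show "norm (bet \<mu> x) \<le> V" using bet_range[OF a, of x] cl_range[of x] l0 by auto
    qed
  qed (rule bet_meas[OF a])
qed

lemma cl_int: "integrable F cl"
proof -
  interpret prob_space F by (rule PF)
  show ?thesis
  proof (rule integrable_const_bound[where B=V])
    show "AE x in F. norm (cl x) \<le> V"
    proof (rule AE_I2)
      fix x show "norm (cl x) \<le> V" using cl_range[of x] l0 by auto
    qed
  qed (rule cl_meas)
qed


lemma phi_cont:
  assumes mu: "l < \<mu>1" "\<mu>1 \<le> \<mu>2" "\<mu>2 < V"
  shows "continuous_on {\<mu>1..\<mu>2} (\<lambda>\<mu>. integral\<^sup>L F (bet \<mu>))"
proof (rule continuous_on_sequentiallyI)
  interpret prob_space F by (rule PF)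
  fix x a assume x: "\<forall>n. x n \<in> {\<mu>1..\<mu>2}" and a: "a \<in> {\<mu>1..\<mu>2}" and lim: "x \<longlonglongrightarrow> a"
  have xr: "l < x n" "x n < V" for n using x[rule_format, of n] mu by auto
  have ar: "l < a" "a < V" using a mu by auto
  show "(\<lambda>n. integral\<^sup>L F (bet (x n))) \<longlonglongrightarrow> integral\<^sup>L F (bet a)"
  proof (rule integral_dominated_convergence[where w="\<lambda>_. V"])
    show "bet a \<in> borel_measurable F" by (rule bet_meas[OF ar])
    show "\<And>n. bet (x n) \<in> borel_measurable F" using bet_meas xr by blast
    show "integrable F (\<lambda>_. V)" by simp
    show "AE v in F. (\<lambda>n. bet (x n) v) \<longlonglongrightarrow> bet a v"
    proof (rule AE_I2)
      fix v
      have cc: "continuous_on {\<mu>1..\<mu>2} (\<lambda>\<mu>. cf l V m \<mu> (cl v))"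
        by (rule cf_cont) (use mu m0 cl_range in auto)
      show "(\<lambda>n. bet (x n) v) \<longlonglongrightarrow> bet a v" unfolding bet_def
        by (rule continuous_on_tendsto_compose[OF cc lim a]) (use x in auto)
    qed
    fix n show "AE v in F. norm (bet (x n) v) \<le> V"
    proof (rule AE_I2)
      fix v show "norm (bet (x n) v) \<le> V" using bet_range[OF xr(1)[of n] xr(2)[of n], of v] cl_range[of v] l0 by auto
    qed
  qed
qed


lemma exists_fp: "\<exists>\<mu>. l < \<mu> \<and> \<mu> < V \<and> integral\<^sup>L F (bet \<mu>) = \<mu>"
proof -
  interpret prob_space F by (rule PF)
  define t where "t = (V - l) / 2"
  have t0: "0 < t" using lV unfolding t_def by simp
  define A where "A = {l - t <..< l + t}"
  have pA: "0 < measure F A" unfolding A_def using supp_pos[OF PF SF lS t0] .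
  have AS: "A \<in> sets F" unfolding A_def using SF by simp
  define E where "E = integral\<^sup>L F cl"
  have El: "l \<le> E" unfolding E_def
    using integral_mono[OF integrable_const cl_int, of l] cl_range by (simp add: prob_space)
  have "integral\<^sup>L F (\<lambda>v. t * indicator A v) \<le> integral\<^sup>L F (\<lambda>v. V - cl v)"
  proof (rule integral_mono)
    show "integrable F (\<lambda>v. t * indicator A v)" using AS by (auto simp: emeasure_eq_measure)
    show "integrable F (\<lambda>v. V - cl v)" using cl_int by auto
    fix v
    show "t * indicator A v \<le> V - cl v"
    proof (cases "v \<in> A")
      case True
      then have "cl v \<le> l + t" unfolding A_def cl_def using t0 by auto
      then have "t \<le> V - cl v" unfolding t_def by argo
      then show ?thesis using True by simp
    next
      case False then show ?thesis using cl_range[of v] by simp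
    qed
  qed
  then have VE: "t * measure F A \<le> V - E" unfolding E_def using cl_int AS
    by (simp add: prob_space integral_diff)
  define \<mu>2 where "\<mu>2 = (E + V) / 2"
  have tp: "0 < t * measure F A" using t0 pA by simp
  have mu2a: "l < \<mu>2" using El VE tp lV unfolding \<mu>2_def t_def by argo
  have mu2b: "\<mu>2 < V" using El VE tp lV unfolding \<mu>2_def t_def by argo
  have mu2c: "t \<le> \<mu>2 - l" using El VE tp lV unfolding \<mu>2_def t_def by argo
  note mu2 = mu2a mu2b mu2c
  have phi2: "integral\<^sup>L F (bet \<mu>2) - \<mu>2 \<le> 0"
  proof -
    have "integral\<^sup>L F (bet \<mu>2) \<le> E" unfolding E_def
      by (rule integral_mono[OF bet_int[OF mu2(1,2)] cl_int]) (use bet_range[OF mu2(1,2)] in auto)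
    moreover have "E < \<mu>2" using VE tp unfolding \<mu>2_def by argo
    ultimately show ?thesis by simp
  qed
  define Bs where "Bs = {V - t <..< V + t}"
  define p where "p = measure F Bs"
  have p: "0 < p" "p \<le> 1" unfolding p_def Bs_def using supp_pos[OF PF SF VS t0] prob_le_1 by auto
  have BS: "Bs \<in> sets F" unfolding Bs_def using SF by simp
  define e where "e = p^2 * t / 4"
  have e0: "0 < e" "e \<le> t / 4" unfolding e_def using p t0
    by (auto simp: power2_eq_square mult_le_one)
  define \<mu>1 where "\<mu>1 = l + e"
  have mu1: "l < \<mu>1" "\<mu>1 \<le> \<mu>2" "\<mu>1 < V" using e0 mu2 t0 unfolding \<mu>1_def by auto
  define v0 where "v0 = l + t"
  have v0a: "l \<le> v0" using t0 unfolding v0_def by argo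
  have v0b: "v0 \<le> V" using lV unfolding v0_def t_def by argo
  have v0c: "v0 = V - t" unfolding v0_def t_def by argo
  note v0 = v0a v0b v0c
  define c0 where "c0 = cf l V m \<mu>1 v0"
  have cl0: "\<mu>1 < c0 \<and> (v0 - c0) * (\<mu>1 - l) \<le> (c0 - l)^2"
  proof -
    have "\<mu>1 - l < v0 - \<mu>1" unfolding \<mu>1_def v0_def using e0 t0 by argo
    then show ?thesis unfolding c0_def by (rule eqp.cf_lower[OF eqpI[OF mu1(1,3)] v0(1,2)])
  qed
  have me: "\<mu>1 - l = e" unfolding \<mu>1_def by simp
  have key: "e < p * (c0 - l)"
  proof (rule key_ineq[OF p t0 e_def v0_def])
    show "l < c0" using cl0 mu1 by simp
    show "(v0 - c0) * e \<le> (c0 - l)^2" using cl0 me by simp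
  qed
  have phi1: "0 \<le> integral\<^sup>L F (bet \<mu>1) - \<mu>1"
  proof -
    have "integral\<^sup>L F (\<lambda>v. l + (c0 - l) * indicator Bs v) \<le> integral\<^sup>L F (bet \<mu>1)"
    proof (rule integral_mono)
      show "integrable F (\<lambda>v. l + (c0 - l) * indicator Bs v)" using BS by (auto simp: emeasure_eq_measure)
      show "integrable F (bet \<mu>1)" by (rule bet_int[OF mu1(1,3)])
      fix v
      show "l + (c0 - l) * indicator Bs v \<le> bet \<mu>1 v"
      proof (cases "v \<in> Bs")
        case True
        then have "v0 \<le> cl v" unfolding Bs_def cl_def using v0 by auto
        then have "c0 \<le> bet \<mu>1 v" unfolding c0_def bet_def
          using cf_mono'[OF mu1(1,3) v0(1) _ ] cl_range by auto
        then show ?thesis using True by simp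
      next
        case False then show ?thesis using bet_range[OF mu1(1,3), of v] by simp
      qed
    qed
    moreover have "integral\<^sup>L F (\<lambda>v. l + (c0 - l) * indicator Bs v) = l + (c0 - l) * p"
    proof -
      have i1: "integrable F (\<lambda>v. (c0 - l) * indicator Bs v)" using BS by (auto simp: emeasure_eq_measure)
      have "integral\<^sup>L F (\<lambda>v. l + (c0 - l) * indicator Bs v)
          = integral\<^sup>L F (\<lambda>v. l) + integral\<^sup>L F (\<lambda>v. (c0 - l) * indicator Bs v)"
        by (rule Bochner_Integration.integral_add) (use i1 in auto)
      then show ?thesis unfolding p_def using BS by (simp add: prob_space)
    qed
    ultimately have "l + (c0 - l) * p \<le> integral\<^sup>L F (bet \<mu>1)" by simp
    then show ?thesis using key unfolding \<mu>1_def by (simp add: mult.commute)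
  qed
  have "\<exists>\<mu>. \<mu>1 \<le> \<mu> \<and> \<mu> \<le> \<mu>2 \<and> integral\<^sup>L F (bet \<mu>) - \<mu> = 0"
  proof (rule IVT2')
    show "integral\<^sup>L F (bet \<mu>2) - \<mu>2 \<le> 0" by (rule phi2)
    show "0 \<le> integral\<^sup>L F (bet \<mu>1) - \<mu>1" by (rule phi1)
    show "\<mu>1 \<le> \<mu>2" by (rule mu1(2))
    show "continuous_on {\<mu>1..\<mu>2} (\<lambda>\<mu>. integral\<^sup>L F (bet \<mu>) - \<mu>)"
      using phi_cont[OF mu1(1,2) mu2(2)] by (intro continuous_intros) auto
  qed
  then obtain \<mu> where mu: "\<mu>1 \<le> \<mu>" "\<mu> \<le> \<mu>2" "integral\<^sup>L F (bet \<mu>) - \<mu> = 0" by blast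
  have "l < \<mu>" by (rule less_le_trans[OF mu1(1) mu(1)])
  moreover have "\<mu> < V" by (rule le_less_trans[OF mu(2) mu2(2)])
  ultimately show ?thesis using mu(3) by (intro exI[of _ \<mu>]) simp
qed


lemma gcase_eq:
  assumes n: "2 \<le> n" "m = n - 1"
  shows "\<exists>\<mu> u \<beta>. moment_equilibrium n F (\<lambda>i. \<beta>) (\<lambda>i. l) (\<lambda>i. \<mu>) (\<lambda>i. u) \<and> strict_mono_on (supp F) \<beta>"
proof -
  obtain \<mu> where mu: "l < \<mu>" "\<mu> < V" "integral\<^sup>L F (bet \<mu>) = \<mu>" using exists_fp by blast
  interpret E: eqp l V m \<mu> by (rule eqpI[OF mu(1,2)])
  let ?u = "Uf l V m \<mu>"
  have bv: "v \<in> supp F \<Longrightarrow> bet \<mu> v = cf l V m \<mu> v" for v unfolding bet_def using cl_id rng by simp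
  have Jp: "finite ({0..<n} - {i})" "card ({0..<n} - {i}) = m" "{0..<n} - {i} \<noteq> {}" if "i < n" for i
  proof -
    show "finite ({0..<n} - {i})" by simp
    show "card ({0..<n} - {i}) = m" using that n by (simp add: card_Diff_singleton)
    show "{0..<n} - {i} \<noteq> {}"
    proof
      assume "{0..<n} - {i} = {}"
      then have "card ({0..<n} - {i}) = 0" by simp
      then show False using that n by (simp add: card_Diff_singleton)
    qed
  qed
  have ME: "moment_equilibrium n F (\<lambda>i. bet \<mu>) (\<lambda>i. l) (\<lambda>i. \<mu>) (\<lambda>i. ?u)"
    unfolding moment_equilibrium_def
  proof (intro conjI allI impI ballI)
    fix i assume "i < n"
    show "bet \<mu> \<in> borel_measurable borel" by (rule bet_meas_borel[OF mu(1,2)])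
  next
    fix i v assume "i < n" "v \<in> supp F"
    show "0 \<le> bet \<mu> v" using bet_range[OF mu(1,2), of v] l0 by simp
  next
    fix i v assume i: "i < n" and v: "v \<in> supp F"
    show "minimax_loss_bid ({0..<n} - {i}) l \<mu> ?u v (bet \<mu> v)"
      unfolding bv[OF v] by (rule E.cf_minimax[OF Jp[OF i] l0]) (use rng[OF v] in auto)
  next
    fix i j assume "i < n" "j < n" "j \<noteq> i"
    show "integrable F (bet \<mu>)" by (rule bet_int[OF mu(1,2)])
    show "integral\<^sup>L F (bet \<mu>) = \<mu>" by (rule mu(3))
  next
    fix i j assume "i < n" "j < n" "j \<noteq> i"
    show "Inf (bet \<mu> ` supp F) = l"
    proof (rule cInf_eq_minimum)
      show "l \<in> bet \<mu> ` supp F" using bv[OF lS] E.cf_l lS by force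
      fix x assume "x \<in> bet \<mu> ` supp F"
      then show "l \<le> x" using bet_range[OF mu(1,2)] by auto
    qed
    show "Sup (bet \<mu> ` supp F) = ?u"
    proof (rule cSup_eq_maximum)
      show "?u \<in> bet \<mu> ` supp F" using bv[OF VS] E.cf_V VS by force
      fix x assume "x \<in> bet \<mu> ` supp F"
      then obtain v where v: "v \<in> supp F" "x = bet \<mu> v" by auto
      have "cf l V m \<mu> v \<le> cf l V m \<mu> V" using cf_mono'[OF mu(1,2)] rng[OF v(1)] by simp
      then show "x \<le> ?u" using v bv E.cf_V by simp
    qed
  qed
  have SM: "strict_mono_on (supp F) (bet \<mu>)"
  proof (rule strict_mono_onI)
    fix r s assume "r \<in> supp F" "s \<in> supp F" "r < s"
    then show "bet \<mu> r < bet \<mu> s" using bv E.cf_mono rng by simp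
  qed
  show ?thesis using ME SM by blast
qed

end

lemma MLoss_single:
  assumes J: "finite J" "J \<noteq> {}" and l0: "0 \<le> l" and b: "0 \<le> b"
  shows "max_loss J l l l l l \<le> max_loss J l l l l b"
proof -
  have up: "max_loss J l l l l l \<le> 0" unfolding max_loss_def
  proof (rule SUP_least)
    fix B assume B: "B \<in> belief_set J l l l"
    interpret prodb J B by (rule belief_prodb[OF J(1) B])
    have Bj: "\<And>j. j \<in> J \<Longrightarrow> B j \<in> indiv_beliefs l l l" using B unfolding belief_set_def by auto
    have "loss J B l l \<le> ereal 0"
    proof (rule loss_le_ereal)
      fix b' :: real assume "0 \<le> b'"
      show "exp_payoff J B l b' \<le> exp_payoff J B l l + 0"
      proof (cases "l \<le> b'")
        case True
        then show ?thesis unfolding exp_payoff_Eb using Eb_nonneg[of b'] by (simp add: mult_nonpos_nonneg)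
      next
        case False
        obtain j where j: "j \<in> J" using J by auto
        have "(\<Prod>j\<in>J. measure (B j) {..b'}) = 0"
          using j J False below_l[OF Bj] by (intro prod_zero) auto
        then have "Eb b' = 0" using Eb_upper[of b'] Eb_nonneg[of b'] by simp
        then show ?thesis unfolding exp_payoff_Eb by simp
      qed
    qed
    then show "loss J B l l \<le> 0" by (simp add: zero_ereal_def)
  qed
  have Bin: "(\<lambda>_. TP l l 1) \<in> belief_set J l l l" by (rule TP_in_set) (use l0 in auto)
  have "ereal (exp_payoff J (\<lambda>_. TP l l 1) l b - exp_payoff J (\<lambda>_. TP l l 1) l b) \<le> loss J (\<lambda>_. TP l l 1) l b"
    by (rule loss_ge[OF b])
  also have "\<dots> \<le> max_loss J l l l l b" by (rule max_loss_ge[OF Bin])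
  finally have "0 \<le> max_loss J l l l l b" by (simp add: zero_ereal_def)
  then show ?thesis using up by simp
qed

lemma single_case:
  assumes n: "2 \<le> n" and PF: "prob_space F" and l0: "0 \<le> l" and S: "supp F = {l}"
  shows "\<exists>(l' :: real) (\<mu> :: real) (u :: real) (\<beta> :: real \<Rightarrow> real).
           moment_equilibrium n F (\<lambda>i. \<beta>) (\<lambda>i. l') (\<lambda>i. \<mu>) (\<lambda>i. u) \<and> strict_mono_on (supp F) \<beta>"
proof (intro exI conjI)
  interpret prob_space F by (rule PF)
  show "moment_equilibrium n F (\<lambda>i. \<lambda>_. l) (\<lambda>i. l) (\<lambda>i. l) (\<lambda>i. l)"
    unfolding moment_equilibrium_def
  proof (intro conjI allI impI ballI)
    fix i v assume i: "i < n" and v: "v \<in> supp F"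
    then have vl: "v = l" using S by simp
    have Jp: "finite ({0..<n} - {i})" "{0..<n} - {i} \<noteq> {}"
    proof -
      show "finite ({0..<n} - {i})" by simp
      show "{0..<n} - {i} \<noteq> {}"
      proof
        assume "{0..<n} - {i} = {}"
        then have "card ({0..<n} - {i}) = 0" by simp
        then show False using i n by (simp add: card_Diff_singleton)
      qed
    qed
    show "minimax_loss_bid ({0..<n} - {i}) l l l v l"
      unfolding minimax_loss_bid_def vl using MLoss_single[OF Jp l0] l0 by auto
  qed (use l0 S in \<open>auto simp: prob_space\<close>)
  show "strict_mono_on (supp F) (\<lambda>_. l)" unfolding S by (rule strict_mono_onI) auto
qed


theorem theorem2:
  fixes n :: nat and F :: "real measure" and vlo vhi :: real
  assumes "n \<ge> 2"
    and "prob_space F" and "sets F = sets borel"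
    and "0 \<le> vlo" and "vlo \<le> vhi"
    and "supp F \<subseteq> {vlo..vhi}"
  shows "\<exists>(l :: real) (\<mu> :: real) (u :: real) (\<beta> :: real \<Rightarrow> real).
           moment_equilibrium n F (\<lambda>i. \<beta>) (\<lambda>i. l) (\<lambda>i. \<mu>) (\<lambda>i. u) \<and>
           strict_mono_on (supp F) \<beta>"
proof -
  note n = assms(1) and PF = assms(2) and SF = assms(3) and sub = assms(6)
  have ne: "supp F \<noteq> {}" by (rule supp_ne[OF PF SF])
  have clo: "closed (supp F)" by (rule supp_closed[OF PF SF])
  have bb: "bdd_below (supp F)" using sub by (meson bdd_below_Icc bdd_below_mono)
  have ba: "bdd_above (supp F)" using sub by (meson bdd_above_Icc bdd_above_mono)
  define l where "l = Inf (supp F)"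
  define V where "V = Sup (supp F)"
  have lS: "l \<in> supp F" unfolding l_def by (rule closed_contains_Inf[OF ne bb clo])
  have VS: "V \<in> supp F" unfolding V_def by (rule closed_contains_Sup[OF ne ba clo])
  have rng: "l \<le> v \<and> v \<le> V" if "v \<in> supp F" for v
    unfolding l_def V_def using that bb ba by (auto intro: cInf_lower cSup_upper)
  have l0: "0 \<le> l" using lS sub assms(4) by auto
  show ?thesis
  proof (cases "l < V")
    case True
    have m0: "0 < n - 1" using n by simp
    have G: "gcase F l V (n - 1)" unfolding gcase_def
    proof (intro conjI allI impI)
      fix v assume "v \<in> supp F" then show "l \<le> v" "v \<le> V" using rng by auto
    qed (rule PF SF l0 True lS VS m0)+
    interpret gcase F l V "n - 1" by (rule G)
    obtain \<mu> u \<beta> where "moment_equilibrium n F (\<lambda>i. \<beta>) (\<lambda>i. l) (\<lambda>i. \<mu>) (\<lambda>i. u) \<and> strict_mono_on (supp F) \<beta>"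
      using gcase_eq[OF n refl] by blast
    then show ?thesis by blast
  next
    case False
    then have Vl: "V \<le> l" by simp
    have "supp F = {l}"
    proof (rule set_eqI, rule iffI)
      fix v assume v: "v \<in> supp F"
      have "l \<le> v" "v \<le> V" using rng[OF v] by auto
      then have "v = l" using Vl by (meson antisym order_trans)
      then show "v \<in> {l}" by simp
    next
      fix v assume "v \<in> {l}" then show "v \<in> supp F" using lS by simp
    qed
    then show ?thesis by (rule single_case[OF n PF l0])
  qed
qed


end
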